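(* Let $(\mathcal L,\mathcal P)$ be a solution of the $N$-dcmKP hierarchy, $\phi=\sum_{n\ge0}\phi_nk^{-n}$ a dressing function for it, and $v_n(s,t)$ the coefficients of the Orlov–Schulman function $\mathcal M$. Then $$\mathcal B_n=\mathcal L^n+\frac{\partial\phi_0}{\partial t_n}-\sum_{m\ge1}\frac1m\frac{\partial v_m}{\partial t_n}\mathcal L^{-m},\qquad \log\mathcal P=N\log\mathcal L+\frac{\partial\phi_0}{\partial s}-\sum_{m\ge1}\frac1m\frac{\partial v_m}{\partial s}\mathcal L^{-m}.$$
   Context: Fix a positive integer $N$. Independent variables are $s$ (continuous), $x$ and $t=(t_1,t_2,\dots)$. Consider a formal Laurent series $\mathcal L(k;s,t)=k+\sum_{n\ge1}u_n(s,t)k^{1-n}$ and a polynomial $\mathcal P(k;s,t)=\sum_{n=0}^{N-1}p_n(s,t)k^{N-n}$ with $p_0\ne0$. The Poisson bracket is $\{f,g\}=\frac{\partial f}{\partial k}\frac{\partial g}{\partial x}-\frac{\partial f}{\partial x}\frac{\partial g}{\partial k}$; $(\mathrm{ad} f)g:=\{f,g\}$. Projections $(\cdot)_{>0}$, $(\cdot)_{\le0}$, $(\cdot)_0$ refer to powers of $k$. $\log\mathcal P:=\log p_0+N\log k+\log(1+\sum_{n=1}^{N-1}(p_n/p_0)k^{-n})$ and $N\log\mathcal L:=N\log k+N\log(\mathcal L/k)$, expanded in $k^{-1}$. The $N$-dcmKP hierarchy is $\partial_{t_n}\mathcal L=\{\mathcal B_n,\mathcal L\}$ with $\mathcal B_n:=(\mathcal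 L^n)_{>0}$, $\partial_s\mathcal L=\{\log\mathcal P,\mathcal L\}$, $\partial_{t_n}\log\mathcal P=\partial_s\mathcal B_n-\{\log\mathcal P,\mathcal B_n\}$ ($n\ge1$); $x$ and $t_1$ enter only via $x+t_1$. $\mathcal B^c_n:=-(\mathcal L^n)_{\le0}$. For series $\psi,\phi$ and a variable $u$, $\nabla_{u,\psi}\phi:=\sum_{m\ge0}\frac{1}{(m+1)!}(\mathrm{ad}\psi)^m\partial_u\phi$. A dressing function is a series $\phi=\sum_{n\ge0}\phi_n(s,t)k^{-n}$ with $\mathcal L=e^{\mathrm{ad}\phi}k$, $\nabla_{t_n,\phi}\phi=\mathcal B^c_n$, $\nabla_{s,\phi}\phi=\log\mathcal P-N\log\mathcal L$. The Orlov–Schulman function is $\mathcal M:=e^{\mathrm{ad}\phi}\bigl(\sum_{n\ge1}nt_nk^{n-1}+x+Nsk^{-1}\bigr)$, which can be written as $\mathcal M=\sum_{n\ge1}nt_n\mathcal L^{n-1}+x+Ns\mathcal L^{-1}+\sum_{n\ge1}v_n(s,t)\mathcal L^{-n-1}$; this defines the functions $v_n$. *)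

theory Defs
  imports "HOL-Analysis.Analysis"
begin

text \<open>Coefficient functions: functions of the point p :: nat => real, where
  p 0 = s, p 1 = x, p (Suc n) = t_n for n >= 1.
  Series in k with finitely many positive powers: F :: int => coef, F j = coefficient of k^j.\<close>

type_synonym coef = "(nat \<Rightarrow> real) \<Rightarrow> real"
type_synonym ser = "int \<Rightarrow> coef"

definition vs :: nat where "vs = 0"
definition vx :: nat where "vx = 1"
definition vt :: "nat \<Rightarrow> nat" where "vt n = Suc n"

definition zc :: coef where "zc = (\<lambda>p. 0)"
definition zser :: ser where "zser = (\<lambda>j. zc)"

definition pd :: "nat \<Rightarrow> coef \<Rightarrow> coef" where
  "pd i f = (\<lambda>p. deriv (\<lambda>h. f (p(i := h))) (p i))"

coinductive smooth_fn :: "coef \<Rightarrow> bool" where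
  "\<lbrakk> \<forall>i p. (\<lambda>h. f (p(i := h))) differentiable (at (p i));
     \<forall>i j p. continuous_on UNIV (\<lambda>(a, b). f (p(i := a, j := b)));
     \<forall>i. smooth_fn (pd i f) \<rbrakk> \<Longrightarrow> smooth_fn f"

text \<open>Dependence on x and t_1 only through x + t_1.\<close>
definition dep_xt :: "coef \<Rightarrow> bool" where
  "dep_xt f \<longleftrightarrow> (\<forall>p. f p = f (p(vx := 0, vt 1 := p vx + p (vt 1))))"

definition bdd_ser :: "ser \<Rightarrow> bool" where
  "bdd_ser F \<longleftrightarrow> (\<exists>D. \<forall>j>D. F j = zc)"

definition ladd :: "ser \<Rightarrow> ser \<Rightarrow> ser" where "ladd F G = (\<lambda>j p. F j p + G j p)"
definition lneg :: "ser \<Rightarrow> ser" where "lneg F = (\<lambda>j p. - F j p)"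
definition lsub :: "ser \<Rightarrow> ser \<Rightarrow> ser" where "lsub F G = (\<lambda>j p. F j p - G j p)"
definition lscal :: "coef \<Rightarrow> ser \<Rightarrow> ser" where "lscal c F = (\<lambda>j p. c p * F j p)"
definition lcst :: "coef \<Rightarrow> ser" where "lcst c = (\<lambda>j. if j = 0 then c else zc)"
definition lone :: ser where "lone = lcst (\<lambda>p. 1)"
definition kser :: ser where "kser = (\<lambda>j p. if j = 1 then 1 else 0)"
definition kshift :: "int \<Rightarrow> ser \<Rightarrow> ser" where "kshift d F = (\<lambda>j. F (j - d))"

definition lmul :: "ser \<Rightarrow> ser \<Rightarrow> ser" where
  "lmul F G = (\<lambda>j p. \<Sum>a\<in>{a. F a \<noteq> zc \<and> G (j - a) \<noteq> zc}. F a p * G (j - a) p)"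

fun lpow :: "ser \<Rightarrow> nat \<Rightarrow> ser" where
  "lpow F 0 = lone"
| "lpow F (Suc n) = lmul F (lpow F n)"

definition linv :: "ser \<Rightarrow> ser" where
  "linv F = (THE G. bdd_ser G \<and> lmul G F = lone)"
definition lnpow :: "ser \<Rightarrow> nat \<Rightarrow> ser" where "lnpow F m = lpow (linv F) m"

definition dk :: "ser \<Rightarrow> ser" where "dk F = (\<lambda>j p. of_int (j + 1) * F (j + 1) p)"
definition du :: "nat \<Rightarrow> ser \<Rightarrow> ser" where "du i F = (\<lambda>j. pd i (F j))"

definition pbr :: "ser \<Rightarrow> ser \<Rightarrow> ser" where
  "pbr F G = lsub (lmul (dk F) (du vx G)) (lmul (du vx F) (dk G))"

definition ppos :: "ser \<Rightarrow> ser" where "ppos F = (\<lambda>j. if j > 0 then F j else zc)"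
definition pnonpos :: "ser \<Rightarrow> ser" where "pnonpos F = (\<lambda>j. if j \<le> 0 then F j else zc)"

text \<open>Formal (k-adically convergent) sum of a sequence of series, coefficientwise;
  each coefficient receives only finitely many nonzero contributions.\<close>
definition fsum :: "(nat \<Rightarrow> ser) \<Rightarrow> ser" where
  "fsum S = (\<lambda>j p. \<Sum>m\<in>{m. S m j \<noteq> zc}. S m j p)"

definition exp_ad :: "ser \<Rightarrow> ser \<Rightarrow> ser" where
  "exp_ad \<phi> X = fsum (\<lambda>m. lscal (\<lambda>p. 1 / fact m) ((pbr \<phi> ^^ m) X))"

definition nabla :: "nat \<Rightarrow> ser \<Rightarrow> ser \<Rightarrow> ser" where
  "nabla i \<psi> F = fsum (\<lambda>m. lscal (\<lambda>p. 1 / fact (Suc m)) ((pbr \<psi> ^^ m) (du i F)))"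

text \<open>log(1+G) for G with only negative powers of k.\<close>
definition log1p :: "ser \<Rightarrow> ser" where
  "log1p G = fsum (\<lambda>m. if m = 0 then zser
      else lscal (\<lambda>p. (-1) ^ (m + 1) / real m) (lpow G m))"

text \<open>Regular parts: log P - N log k and N log L - N log k.
  Here p_n = P (N - n), p_0 = P N.\<close>
definition logP_reg :: "nat \<Rightarrow> ser \<Rightarrow> ser" where
  "logP_reg N P = ladd (lcst (\<lambda>p. ln \<bar>P (int N) p\<bar>))
     (log1p (\<lambda>j p. if j < 0 \<and> - j \<le> int N - 1 then P (int N + j) p / P (int N) p else 0))"

definition NlogL_reg :: "nat \<Rightarrow> ser \<Rightarrow> ser" where
  "NlogL_reg N L = lscal (\<lambda>p. real N) (log1p (\<lambda>j. if j < 0 then L (j + 1) else zc))"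

text \<open>{log P, F} = {log P - N log k, F} + N k^{-1} F_x.\<close>
definition pbr_logP :: "nat \<Rightarrow> ser \<Rightarrow> ser \<Rightarrow> ser" where
  "pbr_logP N P F = ladd (pbr (logP_reg N P) F) (lscal (\<lambda>p. real N) (kshift (-1) (du vx F)))"

definition Bn :: "ser \<Rightarrow> nat \<Rightarrow> ser" where "Bn L n = ppos (lpow L n)"
definition Bcn :: "ser \<Rightarrow> nat \<Rightarrow> ser" where "Bcn L n = lneg (pnonpos (lpow L n))"

end

theory Submission
  imports Defs "HOL-Computational_Algebra.Formal_Laurent_Series"
begin


definition hasd :: "coef \<Rightarrow> bool" where
 "hasd f \<longleftrightarrow> (\<forall>i p. ((\<lambda>h. f (p(i:=h))) has_field_derivative pd i f p) (at (p i)))"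

definition cont2 :: "coef \<Rightarrow> bool" where
 "cont2 f \<longleftrightarrow> (\<forall>i j p. continuous_on UNIV (\<lambda>(a, b). f (p(i := a, j := b))))"

lemma smooth_hasd: "smooth_fn f \<Longrightarrow> hasd f"
  unfolding hasd_def
proof (intro allI)
  fix i p assume "smooth_fn f"
  then have "(\<lambda>h. f (p(i := h))) differentiable (at (p i))" by (cases rule: smooth_fn.cases) auto
  then show "((\<lambda>h. f (p(i:=h))) has_field_derivative pd i f p) (at (p i))"
    unfolding pd_def using DERIV_deriv_iff_real_differentiable by blast
qed

lemma smooth_cont2: "smooth_fn f \<Longrightarrow> cont2 f"
  unfolding cont2_def by (cases rule: smooth_fn.cases) auto

lemma smooth_pd: "smooth_fn f \<Longrightarrow> smooth_fn (pd i f)"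
  by (cases rule: smooth_fn.cases) auto

lemma pd_eqI: "((\<lambda>h. f (p(i:=h))) has_field_derivative D) (at (p i)) \<Longrightarrow> pd i f p = D"
  unfolding pd_def by (rule DERIV_imp_deriv)

inductive Alg :: "coef \<Rightarrow> bool" where
  Alg_sm: "smooth_fn f \<Longrightarrow> Alg f"
| Alg_const: "Alg (\<lambda>p. c)"
| Alg_crd: "Alg (\<lambda>p. p k)"
| Alg_add: "Alg f \<Longrightarrow> Alg g \<Longrightarrow> Alg (\<lambda>p. f p + g p)"
| Alg_mult: "Alg f \<Longrightarrow> Alg g \<Longrightarrow> Alg (\<lambda>p. f p * g p)"
| Alg_neg: "Alg f \<Longrightarrow> Alg (\<lambda>p. - f p)"

lemma pd_add: "hasd f \<Longrightarrow> hasd g \<Longrightarrow> pd i (\<lambda>p. f p + g p) = (\<lambda>p. pd i f p + pd i g p)"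
  unfolding hasd_def by (intro ext pd_eqI) (auto intro!: derivative_eq_intros)
lemma pd_mult: "hasd f \<Longrightarrow> hasd g \<Longrightarrow> pd i (\<lambda>p. f p * g p) = (\<lambda>p. f p * pd i g p + pd i f p * g p)"
  unfolding hasd_def by (intro ext pd_eqI) (auto intro!: derivative_eq_intros)
lemma pd_neg: "hasd f \<Longrightarrow> pd i (\<lambda>p. - f p) = (\<lambda>p. - pd i f p)"
  unfolding hasd_def by (intro ext pd_eqI) (auto intro!: derivative_eq_intros)
lemma pd_const: "pd i (\<lambda>p. c) = (\<lambda>p. 0)"
  by (intro ext pd_eqI) (auto intro!: derivative_eq_intros)
lemma pd_crd: "pd i (\<lambda>p. p k) = (\<lambda>p. if i = k then 1 else 0)"
proof (intro ext pd_eqI)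
  fix p
  show "((\<lambda>h. (p(i := h)) k) has_field_derivative (if i = k then 1 else 0)) (at (p i))"
    by (cases "i = k") (auto intro!: derivative_eq_intros)
qed

lemma hasd_add: "hasd f \<Longrightarrow> hasd g \<Longrightarrow> hasd (\<lambda>p. f p + g p)"
  using pd_add[of f g] unfolding hasd_def by (auto intro!: derivative_eq_intros)
lemma hasd_mult: "hasd f \<Longrightarrow> hasd g \<Longrightarrow> hasd (\<lambda>p. f p * g p)"
  using pd_mult[of f g] unfolding hasd_def by (auto intro!: derivative_eq_intros)
lemma hasd_neg: "hasd f \<Longrightarrow> hasd (\<lambda>p. - f p)"
  using pd_neg[of f] unfolding hasd_def by (auto intro!: derivative_eq_intros)
lemma hasd_const: "hasd (\<lambda>p. c)"
  using pd_const unfolding hasd_def by (auto intro!: derivative_eq_intros)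
lemma hasd_crd: "hasd (\<lambda>p. p k)"
  unfolding hasd_def pd_crd by (auto intro!: derivative_eq_intros)

lemma cont2_add: "cont2 f \<Longrightarrow> cont2 g \<Longrightarrow> cont2 (\<lambda>p. f p + g p)"
  unfolding cont2_def
proof (intro allI)
  fix i j p assume a: "\<forall>i j p. continuous_on UNIV (\<lambda>(a, b). f (p(i := a, j := b)))"
    "\<forall>i j p. continuous_on UNIV (\<lambda>(a, b). g (p(i := a, j := b)))"
  have "continuous_on UNIV (\<lambda>z. (\<lambda>(a, b). f (p(i := a, j := b))) z + (\<lambda>(a, b). g (p(i := a, j := b))) z)"
    using a by (intro continuous_on_add) auto
  then show "continuous_on UNIV (\<lambda>(a, b). f (p(i := a, j := b)) + g (p(i := a, j := b)))"
    by (simp add: case_prod_beta')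
qed
lemma cont2_mult: "cont2 f \<Longrightarrow> cont2 g \<Longrightarrow> cont2 (\<lambda>p. f p * g p)"
  unfolding cont2_def
proof (intro allI)
  fix i j p assume a: "\<forall>i j p. continuous_on UNIV (\<lambda>(a, b). f (p(i := a, j := b)))"
    "\<forall>i j p. continuous_on UNIV (\<lambda>(a, b). g (p(i := a, j := b)))"
  have "continuous_on UNIV (\<lambda>z. (\<lambda>(a, b). f (p(i := a, j := b))) z * (\<lambda>(a, b). g (p(i := a, j := b))) z)"
    using a by (intro continuous_on_mult) auto
  then show "continuous_on UNIV (\<lambda>(a, b). f (p(i := a, j := b)) * g (p(i := a, j := b)))"
    by (simp add: case_prod_beta')
qed
lemma cont2_neg: "cont2 f \<Longrightarrow> cont2 (\<lambda>p. - f p)"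
  unfolding cont2_def
proof (intro allI)
  fix i j p assume a: "\<forall>i j p. continuous_on UNIV (\<lambda>(a, b). f (p(i := a, j := b)))"
  have "continuous_on UNIV (\<lambda>z. - (\<lambda>(a, b). f (p(i := a, j := b))) z)"
    using a by (intro continuous_on_minus) auto
  then show "continuous_on UNIV (\<lambda>(a, b). - f (p(i := a, j := b)))"
    by (simp add: case_prod_beta')
qed
lemma cont2_const: "cont2 (\<lambda>p. c)"
  unfolding cont2_def by auto
lemma cont2_crd: "cont2 (\<lambda>p. p k)"
  unfolding cont2_def
proof (intro allI)
  fix i j and p :: "nat \<Rightarrow> real"
  have "(\<lambda>(a, b). (p(i := a, j := b)) k) = (if j = k then snd else if i = k then fst else (\<lambda>z. p k))"
    by (auto simp: fun_eq_iff)
  then show "continuous_on UNIV (\<lambda>(a::real, b::real). (p(i := a, j := b)) k)"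
    by (auto intro!: continuous_intros)
qed

lemma Alg_props: "Alg f \<Longrightarrow> hasd f \<and> cont2 f \<and> (\<forall>i. Alg (pd i f))"
proof (induction rule: Alg.induct)
  case (Alg_sm f)
  then show ?case using smooth_hasd smooth_cont2 smooth_pd Alg.Alg_sm by blast
next
  case (Alg_const c)
  then show ?case using hasd_const cont2_const pd_const Alg.Alg_const by simp
next
  case (Alg_crd k)
  have "Alg (pd i (\<lambda>p. p k))" for i
    unfolding pd_crd by (cases "i = k") (auto intro: Alg.Alg_const)
  then show ?case using hasd_crd cont2_crd by blast
next
  case (Alg_add f g)
  then have "Alg (pd i (\<lambda>p. f p + g p))" for i
    by (simp add: pd_add Alg.Alg_add)
  with Alg_add show ?case by (simp add: hasd_add cont2_add)
next
  case (Alg_mult f g)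
  then have "Alg (pd i (\<lambda>p. f p * g p))" for i
    by (simp add: pd_mult Alg.Alg_add Alg.Alg_mult)
  with Alg_mult show ?case by (simp add: hasd_mult cont2_mult)
next
  case (Alg_neg f)
  then have "Alg (pd i (\<lambda>p. - f p))" for i
    by (simp add: pd_neg Alg.Alg_neg)
  with Alg_neg show ?case by (simp add: hasd_neg cont2_neg)
qed

lemma Alg_smooth: "Alg f \<Longrightarrow> smooth_fn f"
proof (coinduction arbitrary: f rule: smooth_fn.coinduct)
  case (smooth_fn f)
  from Alg_props[OF this] have h: "hasd f" "cont2 f" "\<forall>i. Alg (pd i f)" by auto
  have "(\<lambda>h. f (p(i := h))) differentiable (at (p i))" for i p
    using h(1) unfolding hasd_def pd_def using DERIV_deriv_iff_real_differentiable by blast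
  then show ?case using h unfolding cont2_def by auto
qed

lemma smooth_const: "smooth_fn (\<lambda>p. c)" by (rule Alg_smooth, rule Alg_const)
lemma smooth_crd: "smooth_fn (\<lambda>p. p k)" by (rule Alg_smooth, rule Alg_crd)
lemma smooth_add: "smooth_fn f \<Longrightarrow> smooth_fn g \<Longrightarrow> smooth_fn (\<lambda>p. f p + g p)"
  by (rule Alg_smooth, intro Alg_add Alg_sm)
lemma smooth_mult: "smooth_fn f \<Longrightarrow> smooth_fn g \<Longrightarrow> smooth_fn (\<lambda>p. f p * g p)"
  by (rule Alg_smooth, intro Alg_mult Alg_sm)
lemma smooth_neg: "smooth_fn f \<Longrightarrow> smooth_fn (\<lambda>p. - f p)"
  by (rule Alg_smooth, intro Alg_neg Alg_sm)
lemma smooth_diff: "smooth_fn f \<Longrightarrow> smooth_fn g \<Longrightarrow> smooth_fn (\<lambda>p. f p - g p)"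
  using smooth_add[OF _ smooth_neg, of f g] by simp

lemma clairaut_abs:
  fixes g gx gy gxy gyx :: "real \<Rightarrow> real \<Rightarrow> real"
  assumes d1: "\<And>x y. ((\<lambda>x. g x y) has_field_derivative gx x y) (at x)"
  and d12: "\<And>x y. ((\<lambda>y. gx x y) has_field_derivative gxy x y) (at y)"
  and d2: "\<And>x y. ((\<lambda>y. g x y) has_field_derivative gy x y) (at y)"
  and d21: "\<And>x y. ((\<lambda>x. gy x y) has_field_derivative gyx x y) (at x)"
  and c12: "continuous_on UNIV (\<lambda>(x,y). gxy x y)"
  and c21: "continuous_on UNIV (\<lambda>(x,y). gyx x y)"
  shows "gxy a b = gyx a b"
proof (rule ccontr)
  assume ne: "gxy a b \<noteq> gyx a b"
  define e where "e = \<bar>gxy a b - gyx a b\<bar> / 2"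
  have e: "e > 0" using ne by (simp add: e_def)
  obtain d1 where d1p: "d1 > 0" and d1c: "\<And>z. dist z (a,b) < d1 \<Longrightarrow> dist ((\<lambda>(x,y). gxy x y) z) ((\<lambda>(x,y). gxy x y) (a,b)) < e"
    using c12 e unfolding continuous_on_iff by (metis UNIV_I)
  obtain d2 where d2p: "d2 > 0" and d2c: "\<And>z. dist z (a,b) < d2 \<Longrightarrow> dist ((\<lambda>(x,y). gyx x y) z) ((\<lambda>(x,y). gyx x y) (a,b)) < e"
    using c21 e unfolding continuous_on_iff by (metis UNIV_I)
  define h where "h = min d1 d2 / 2"
  have h: "h > 0" "2 * h \<le> d1" "2 * h \<le> d2" using d1p d2p by (auto simp: h_def)
  have close: "dist (x, y) (a, b) < 2 * h" if "a < x" "x < a + h" "b < y" "y < b + h" for x y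
  proof -
    have "dist (x, y) (a, b) = sqrt ((x - a)\<^sup>2 + (y - b)\<^sup>2)"
      by (simp add: dist_Pair_Pair dist_real_def power2_abs)
    also have "\<dots> \<le> \<bar>x - a\<bar> + \<bar>y - b\<bar>" by (rule sqrt_sum_squares_le_sum_abs)
    also have "\<dots> < 2 * h" using that by auto
    finally show ?thesis .
  qed
  have "\<exists>z. a < z \<and> z < a + h \<and> ((\<lambda>x. g x (b+h) - g x b) (a+h) - (\<lambda>x. g x (b+h) - g x b) a = ((a+h) - a) * (gx z (b+h) - gx z b))"
    using h by (intro MVT2) (auto intro!: derivative_eq_intros d1)
  then obtain \<xi> where xi: "a < \<xi>" "\<xi> < a + h" and e1: "g (a+h) (b+h) - g (a+h) b - (g a (b+h) - g a b) = h * (gx \<xi> (b+h) - gx \<xi> b)"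
    by auto
  have "\<exists>z. b < z \<and> z < b + h \<and> gx \<xi> (b+h) - gx \<xi> b = ((b+h) - b) * gxy \<xi> z"
    using h by (intro MVT2) (auto intro!: d12)
  then obtain \<eta> where eta: "b < \<eta>" "\<eta> < b + h" and e2: "gx \<xi> (b+h) - gx \<xi> b = h * gxy \<xi> \<eta>" by auto
  have "\<exists>z. b < z \<and> z < b + h \<and> ((\<lambda>y. g (a+h) y - g a y) (b+h) - (\<lambda>y. g (a+h) y - g a y) b = ((b+h) - b) * (gy (a+h) z - gy a z))"
    using h by (intro MVT2) (auto intro!: derivative_eq_intros d2)
  then obtain \<eta>' where eta': "b < \<eta>'" "\<eta>' < b + h" and e3: "g (a+h) (b+h) - g a (b+h) - (g (a+h) b - g a b) = h * (gy (a+h) \<eta>' - gy a \<eta>')"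
    by auto
  have "\<exists>z. a < z \<and> z < a + h \<and> gy (a+h) \<eta>' - gy a \<eta>' = ((a+h) - a) * gyx z \<eta>'"
    using h by (intro MVT2) (auto intro!: d21)
  then obtain \<xi>' where xi': "a < \<xi>'" "\<xi>' < a + h" and e4: "gy (a+h) \<eta>' - gy a \<eta>' = h * gyx \<xi>' \<eta>'" by auto
  have "h * (h * gxy \<xi> \<eta>) = h * (h * gyx \<xi>' \<eta>')"
    using e1 e2 e3 e4 by (simp add: algebra_simps)
  then have eq: "gxy \<xi> \<eta> = gyx \<xi>' \<eta>'" using h(1) by simp
  have "dist (\<xi>, \<eta>) (a, b) < d1" using close[OF xi eta] h(2) by linarith
  from d1c[OF this] have c1: "dist (gxy \<xi> \<eta>) (gxy a b) < e" by simp
  have "dist (\<xi>', \<eta>') (a, b) < d2" using close[OF xi' eta'] h(3) by linarith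
  from d2c[OF this] have c2: "dist (gyx \<xi>' \<eta>') (gyx a b) < e" by simp
  have "\<bar>gxy a b - gyx a b\<bar> < 2 * e" using c1 c2 eq unfolding dist_real_def by linarith
  moreover have "2 * e = \<bar>gxy a b - gyx a b\<bar>" by (simp add: e_def)
  ultimately show False by linarith
qed

lemma clairaut:
  assumes "smooth_fn f"
  shows "pd i (pd j f) = pd j (pd i f)"
proof (cases "i = j")
  case True then show ?thesis by simp
next
  case False
  have sf: "smooth_fn (pd i f)" "smooth_fn (pd j f)" "smooth_fn (pd j (pd i f))" "smooth_fn (pd i (pd j f))"
    using assms smooth_pd by blast+
  have H: "hasd f" "hasd (pd i f)" "hasd (pd j f)" using assms sf smooth_hasd by blast+
  have C: "cont2 (pd j (pd i f))" "cont2 (pd i (pd j f))" using sf smooth_cont2 by blast+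
  show ?thesis
  proof
    fix p :: "nat \<Rightarrow> real"
    have upd1: "(p(i := x, j := y))(i := h) = p(i := h, j := y)" for x y h
      using False by (simp add: fun_upd_twist)
    have upd2: "(p(i := x, j := y))(j := h) = p(i := x, j := h)" for x y h
      by simp
    have "(\<lambda>x y. pd j (pd i f) (p(i := x, j := y))) (p i) (p j) = (\<lambda>x y. pd i (pd j f) (p(i := x, j := y))) (p i) (p j)"
    proof (rule clairaut_abs[where g = "\<lambda>x y. f (p(i := x, j := y))"
          and gx = "\<lambda>x y. pd i f (p(i := x, j := y))" and gy = "\<lambda>x y. pd j f (p(i := x, j := y))"
          and gxy = "\<lambda>x y. pd j (pd i f) (p(i := x, j := y))" and gyx = "\<lambda>x y. pd i (pd j f) (p(i := x, j := y))"])
      fix x y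
      have pi: "(p(i := x, j := y)) i = x" "(p(i := x, j := y)) j = y" using False by auto
      have l1: "(\<lambda>h. F ((p(i := x, j := y))(i := h))) = (\<lambda>x. F (p(i := x, j := y)))" for F :: coef
        by (simp add: upd1)
      have l2: "(\<lambda>h. F ((p(i := x, j := y))(j := h))) = (\<lambda>y. F (p(i := x, j := y)))" for F :: coef
        by (simp add: upd2)
      have D: "\<And>F k. hasd F \<Longrightarrow> ((\<lambda>h. F ((p(i := x, j := y))(k := h))) has_field_derivative pd k F (p(i := x, j := y))) (at ((p(i := x, j := y)) k))"
        unfolding hasd_def by blast
      show "((\<lambda>x. f (p(i := x, j := y))) has_field_derivative pd i f (p(i := x, j := y))) (at x)"
        using D[OF H(1), of i] unfolding l1 pi .
      show "((\<lambda>y. pd i f (p(i := x, j := y))) has_field_derivative pd j (pd i f) (p(i := x, j := y))) (at y)"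
        using D[OF H(2), of j] unfolding l2 pi .
      show "((\<lambda>y. f (p(i := x, j := y))) has_field_derivative pd j f (p(i := x, j := y))) (at y)"
        using D[OF H(1), of j] unfolding l2 pi .
      show "((\<lambda>x. pd j f (p(i := x, j := y))) has_field_derivative pd i (pd j f) (p(i := x, j := y))) (at x)"
        using D[OF H(3), of i] unfolding l1 pi .
    next
      show "continuous_on UNIV (\<lambda>(x, y). pd j (pd i f) (p(i := x, j := y)))"
        using C(1) unfolding cont2_def by blast
      show "continuous_on UNIV (\<lambda>(x, y). pd i (pd j f) (p(i := x, j := y)))"
        using C(2) unfolding cont2_def by blast
    qed
    then show "pd i (pd j f) p = pd j (pd i f) p" by simp
  qed
qed


typedef sm = "{f :: coef. smooth_fn f}" morphisms Rep_sm Abs_sm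
  by (rule exI[of _ "\<lambda>p. 0"]) (simp add: smooth_const)

setup_lifting type_definition_sm

instantiation sm :: comm_ring_1
begin
lift_definition zero_sm :: sm is "\<lambda>p. 0" by (rule smooth_const)
lift_definition one_sm :: sm is "\<lambda>p. 1" by (rule smooth_const)
lift_definition plus_sm :: "sm \<Rightarrow> sm \<Rightarrow> sm" is "\<lambda>f g p. f p + g p" by (rule smooth_add)
lift_definition minus_sm :: "sm \<Rightarrow> sm \<Rightarrow> sm" is "\<lambda>f g p. f p - g p" by (rule smooth_diff)
lift_definition uminus_sm :: "sm \<Rightarrow> sm" is "\<lambda>f p. - f p" by (rule smooth_neg)
lift_definition times_sm :: "sm \<Rightarrow> sm \<Rightarrow> sm" is "\<lambda>f g p. f p * g p" by (rule smooth_mult)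
instance
  by standard (transfer; simp add: algebra_simps fun_eq_iff)+
end

lift_definition Dsm :: "nat \<Rightarrow> sm \<Rightarrow> sm" is pd by (rule smooth_pd)
lift_definition cst :: "real \<Rightarrow> sm" is "\<lambda>r p. r" by (rule smooth_const)
lift_definition crd :: "nat \<Rightarrow> sm" is "\<lambda>k p. p k" by (rule smooth_crd)

lemma Dsm_add [simp]: "Dsm i (a + b) = Dsm i a + Dsm i b"
  by transfer (simp add: pd_add smooth_hasd)
lemma Dsm_mult [simp]: "Dsm i (a * b) = a * Dsm i b + Dsm i a * b"
  by transfer (simp add: pd_mult smooth_hasd)
lemma Dsm_uminus [simp]: "Dsm i (- a) = - Dsm i a"
  by transfer (simp add: pd_neg smooth_hasd)
lemma Dsm_diff [simp]: "Dsm i (a - b) = Dsm i a - Dsm i b"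
  using Dsm_add[of i a "- b"] by simp
lemma Dsm_cst [simp]: "Dsm i (cst r) = 0"
  by transfer (simp add: pd_const)
lemma Dsm_zero [simp]: "Dsm i 0 = 0"
  by transfer (simp add: pd_const)
lemma Dsm_one [simp]: "Dsm i 1 = 0"
  by transfer (simp add: pd_const)
lemma Dsm_crd: "Dsm i (crd k) = cst (if i = k then 1 else 0)"
  by transfer (simp add: pd_crd fun_eq_iff)
lemma Dsm_comm: "Dsm i (Dsm j a) = Dsm j (Dsm i a)"
  by transfer (simp add: clairaut)

lemma cst_add: "cst (a + b) = cst a + cst b" by transfer simp
lemma cst_mult: "cst (a * b) = cst a * cst b" by transfer simp
lemma cst_uminus: "cst (- a) = - cst a" by transfer simp
lemma cst_diff: "cst (a - b) = cst a - cst b" by transfer simp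
lemma cst_0 [simp]: "cst 0 = 0" by transfer simp
lemma cst_1 [simp]: "cst 1 = 1" by transfer simp
lemma of_nat_sm: "(of_nat n :: sm) = cst (of_nat n)"
  by (induction n) (simp_all add: cst_add)
lemma of_int_sm: "(of_int n :: sm) = cst (of_int n)"
  by (cases n rule: int_cases) (simp_all add: of_nat_sm cst_uminus cst_add cst_diff)
lemma Dsm_of_nat [simp]: "Dsm i (of_nat n) = 0" by (simp add: of_nat_sm)
lemma Dsm_of_int [simp]: "Dsm i (of_int n) = 0" by (simp add: of_int_sm)

lemma Rep_sm_add: "Rep_sm (a + b) = (\<lambda>p. Rep_sm a p + Rep_sm b p)" by transfer simp
lemma Rep_sm_mult: "Rep_sm (a * b) = (\<lambda>p. Rep_sm a p * Rep_sm b p)" by transfer simp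
lemma Rep_sm_uminus: "Rep_sm (- a) = (\<lambda>p. - Rep_sm a p)" by transfer simp
lemma Rep_sm_diff: "Rep_sm (a - b) = (\<lambda>p. Rep_sm a p - Rep_sm b p)" by transfer simp
lemma Rep_sm_0: "Rep_sm 0 = zc" unfolding zc_def by transfer simp
lemma Rep_sm_1: "Rep_sm 1 = (\<lambda>p. 1)" by transfer simp
lemma Rep_sm_cst: "Rep_sm (cst r) = (\<lambda>p. r)" by transfer simp
lemma Rep_sm_crd: "Rep_sm (crd k) = (\<lambda>p. p k)" by transfer simp
lemma Rep_sm_Dsm: "Rep_sm (Dsm i a) = pd i (Rep_sm a)" by transfer simp
lemma Rep_sm_eq0: "Rep_sm a = zc \<longleftrightarrow> a = 0"
  using Rep_sm_0 Rep_sm_inject by metis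
lemma Rep_sm_sum: "Rep_sm (\<Sum>x\<in>A. f x) = (\<lambda>p. \<Sum>x\<in>A. Rep_sm (f x) p)"
  by (induction A rule: infinite_finite_induct) (simp_all add: Rep_sm_0 zc_def Rep_sm_add)
lemma smooth_Rep: "smooth_fn (Rep_sm a)" using Rep_sm by simp
lemma Abs_sm_inverse': "smooth_fn f \<Longrightarrow> Rep_sm (Abs_sm f) = f" using Abs_sm_inverse by simp

lemma Dsm_sum: "Dsm i (\<Sum>x\<in>A. f x) = (\<Sum>x\<in>A. Dsm i (f x))"
  by (induction A rule: infinite_finite_induct) simp_all



unbundle fps_syntax

type_synonym fs = "sm fls"

definition lbd :: "fs \<Rightarrow> int \<Rightarrow> bool" where "lbd f c \<longleftrightarrow> (\<forall>n<c. f $$ n = 0)"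

lemma lbdD: "lbd f c \<Longrightarrow> n < c \<Longrightarrow> f $$ n = 0" by (simp add: lbd_def)
lemma lbd_subdeg: "lbd f (fls_subdegree f)" by (simp add: lbd_def)
lemma lbd_mono: "lbd f c \<Longrightarrow> d \<le> c \<Longrightarrow> lbd f d" by (simp add: lbd_def)
lemma lbd_add: "lbd f c \<Longrightarrow> lbd g c \<Longrightarrow> lbd (f + g) c" by (simp add: lbd_def)
lemma lbd_diff: "lbd f c \<Longrightarrow> lbd g c \<Longrightarrow> lbd (f - g) c" by (simp add: lbd_def)
lemma lbd_uminus: "lbd f c \<Longrightarrow> lbd (- f) c" by (simp add: lbd_def)
lemma lbd_0 [simp]: "lbd 0 c" by (simp add: lbd_def)
lemma lbd_const: "lbd (fls_const a) 0" by (simp add: lbd_def)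
lemma lbd_1: "lbd 1 0" by (simp add: lbd_def)
lemma lbd_X: "lbd fls_X 1" by (simp add: lbd_def)
lemma lbd_X_inv: "lbd fls_X_inv (-1)" by (simp add: lbd_def)
lemma lbd_sum: "(\<And>x. x \<in> A \<Longrightarrow> lbd (f x) c) \<Longrightarrow> lbd (\<Sum>x\<in>A. f x) c"
  by (induction A rule: infinite_finite_induct) (auto intro: lbd_add)

lemma mult_nth_set:
  assumes "lbd f a" "lbd g b" "finite I" "{a..n-b} \<subseteq> I"
  shows "(f*g) $$ n = (\<Sum>i\<in>I. f$$i * g$$(n-i))"
proof -
  define S where "S = {fls_subdegree f..n - fls_subdegree g}"
  have "(f*g) $$ n = (\<Sum>i\<in>S. f$$i * g$$(n-i))" unfolding S_def by (rule fls_times_nth(2))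
  also have "\<dots> = (\<Sum>i\<in>S \<union> I. f$$i * g$$(n-i))"
  proof (rule sum.mono_neutral_left)
    show "\<forall>i\<in>S \<union> I - S. f $$ i * g $$ (n - i) = 0"
    proof
      fix i assume "i \<in> S \<union> I - S"
      then have "i < fls_subdegree f \<or> n - i < fls_subdegree g" by (auto simp: S_def)
      then show "f $$ i * g $$ (n - i) = 0" by auto
    qed
  qed (auto simp: S_def assms(3))
  also have "\<dots> = (\<Sum>i\<in>I. f$$i * g$$(n-i))"
  proof (rule sum.mono_neutral_right)
    show "\<forall>i\<in>S \<union> I - I. f $$ i * g $$ (n - i) = 0"
    proof
      fix i assume "i \<in> S \<union> I - I"
      then have "i \<notin> {a..n-b}" using assms(4) by blast
      then have "i < a \<or> n - i < b" by auto
      then show "f $$ i * g $$ (n - i) = 0" using assms(1,2) by (auto simp: lbd_def)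
    qed
  qed (auto simp: S_def assms(3))
  finally show ?thesis .
qed

lemma lbd_mult: "lbd f a \<Longrightarrow> lbd g b \<Longrightarrow> lbd (f * g) (a + b)"
  unfolding lbd_def[of "f*g"] using mult_nth_set[of f a g b "{}"] by auto

lemma mult_nth_low: "lbd f a \<Longrightarrow> lbd g b \<Longrightarrow> (f * g) $$ (a + b) = f $$ a * g $$ b"
  using mult_nth_set[of f a g b "{a}" "a+b"] by auto

lemma lbd_power: "lbd f a \<Longrightarrow> lbd (f ^ n) (int n * a)"
  by (induction n) (auto simp: lbd_1 algebra_simps dest: lbd_mult)

lemma X_X_inv: "(fls_X * fls_X_inv :: fs) = 1"
  by (simp add: fls_X_times_conv_shift)

definition cmap :: "(sm \<Rightarrow> sm) \<Rightarrow> fs \<Rightarrow> fs" where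
  "cmap \<delta> f = Abs_fls (\<lambda>n. \<delta> (f $$ n))"

lemma cmap_nth: "\<delta> 0 = 0 \<Longrightarrow> cmap \<delta> f $$ n = \<delta> (f $$ n)"
  unfolding cmap_def by (rule nth_Abs_fls_lower_bound[of "fls_subdegree f"]) simp

locale der =
  fixes \<delta> :: "sm \<Rightarrow> sm"
  assumes d_add: "\<delta> (a + b) = \<delta> a + \<delta> b"
  and d_mult: "\<delta> (a * b) = a * \<delta> b + \<delta> a * b"
begin
lemma d0: "\<delta> 0 = 0" using d_add[of 0 0] by simp
lemma d_sum: "\<delta> (\<Sum>x\<in>A. f x) = (\<Sum>x\<in>A. \<delta> (f x))"
  by (induction A rule: infinite_finite_induct) (simp_all add: d0 d_add)
lemma d_uminus: "\<delta> (- a) = - \<delta> a"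
proof -
  have "\<delta> a + \<delta> (- a) = 0" using d_add[of a "-a"] d0 by simp
  from add.inverse_unique[OF this] show ?thesis by simp
qed
lemma d_diff: "\<delta> (a - b) = \<delta> a - \<delta> b" using d_add[of a "-b"] by (simp add: d_uminus)
lemma cnth: "cmap \<delta> f $$ n = \<delta> (f $$ n)" by (simp add: cmap_nth d0)
lemma lbd_c: "lbd f c \<Longrightarrow> lbd (cmap \<delta> f) c" by (simp add: lbd_def cnth d0)
lemma c_add: "cmap \<delta> (f + g) = cmap \<delta> f + cmap \<delta> g"
  by (rule fls_eqI) (simp add: cnth d_add)
lemma c_uminus: "cmap \<delta> (- f) = - cmap \<delta> f"
  by (rule fls_eqI) (simp add: cnth d_uminus)
lemma c_diff: "cmap \<delta> (f - g) = cmap \<delta> f - cmap \<delta> g"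
  by (rule fls_eqI) (simp add: cnth d_diff)
lemma c_zero: "cmap \<delta> 0 = 0"
  by (rule fls_eqI) (simp add: cnth d0)
lemma c_sum: "cmap \<delta> (\<Sum>x\<in>A. f x) = (\<Sum>x\<in>A. cmap \<delta> (f x))"
  by (induction A rule: infinite_finite_induct) (simp_all add: c_add c_zero)
lemma c_mult: "cmap \<delta> (f * g) = cmap \<delta> f * g + f * cmap \<delta> g"
proof (rule fls_eqI)
  fix n
  define a b where "a = fls_subdegree f" and "b = fls_subdegree g"
  have la: "lbd f a" "lbd (cmap \<delta> f) a" using lbd_subdeg lbd_c a_def by blast+
  have lb: "lbd g b" "lbd (cmap \<delta> g) b" using lbd_subdeg lbd_c b_def by blast+
  have "cmap \<delta> (f * g) $$ n = \<delta> (\<Sum>i\<in>{a..n-b}. f$$i * g$$(n-i))"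
    by (simp add: cnth mult_nth_set[OF la(1) lb(1), of "{a..n-b}"])
  also have "\<dots> = (\<Sum>i\<in>{a..n-b}. cmap \<delta> f $$ i * g$$(n-i)) + (\<Sum>i\<in>{a..n-b}. f$$i * cmap \<delta> g $$(n-i))"
    by (simp add: d_sum d_mult cnth sum.distrib algebra_simps)
  also have "\<dots> = (cmap \<delta> f * g + f * cmap \<delta> g) $$ n"
    by (simp add: mult_nth_set[OF la(2) lb(1), of "{a..n-b}"] mult_nth_set[OF la(1) lb(2), of "{a..n-b}"])
  finally show "cmap \<delta> (f * g) $$ n = (cmap \<delta> f * g + f * cmap \<delta> g) $$ n" .
qed
lemma c_const: "cmap \<delta> (fls_const a) = fls_const (\<delta> a)"
  by (rule fls_eqI) (simp add: cnth d0)
lemma c_one: "cmap \<delta> 1 = 0"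
  using d_mult[of 1 1] by (intro fls_eqI) (simp add: cnth d0)
lemma c_X: "cmap \<delta> fls_X = 0"
  using d_mult[of 1 1] by (intro fls_eqI) (simp add: cnth d0)
lemma c_X_inv: "cmap \<delta> fls_X_inv = 0"
  using d_mult[of 1 1] by (intro fls_eqI) (simp add: cnth d0)
lemma c_power: "cmap \<delta> (f ^ Suc n) = of_nat (Suc n) * f ^ n * cmap \<delta> f"
  by (induction n) (simp_all add: c_mult algebra_simps)
end

interpretation Dsm_der: der "Dsm i"
  by standard simp_all

definition Du :: "nat \<Rightarrow> fs \<Rightarrow> fs" where "Du i = cmap (Dsm i)"

lemma Du_nth [simp]: "Du i f $$ n = Dsm i (f $$ n)" unfolding Du_def by (rule Dsm_der.cnth)
lemma Du_add [simp]: "Du i (f + g) = Du i f + Du i g" unfolding Du_def by (rule Dsm_der.c_add)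
lemma Du_diff [simp]: "Du i (f - g) = Du i f - Du i g" unfolding Du_def by (rule Dsm_der.c_diff)
lemma Du_uminus [simp]: "Du i (- f) = - Du i f" unfolding Du_def by (rule Dsm_der.c_uminus)
lemma Du_mult [simp]: "Du i (f * g) = Du i f * g + f * Du i g" unfolding Du_def by (rule Dsm_der.c_mult)
lemma Du_sum: "Du i (\<Sum>x\<in>A. f x) = (\<Sum>x\<in>A. Du i (f x))" unfolding Du_def by (rule Dsm_der.c_sum)
lemma Du_const [simp]: "Du i (fls_const a) = fls_const (Dsm i a)" unfolding Du_def by (rule Dsm_der.c_const)
lemma Du_one [simp]: "Du i 1 = 0" unfolding Du_def by (rule Dsm_der.c_one)
lemma Du_zero [simp]: "Du i 0 = 0" unfolding Du_def by (rule Dsm_der.c_zero)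
lemma Du_X [simp]: "Du i fls_X = 0" unfolding Du_def by (rule Dsm_der.c_X)
lemma Du_X_inv [simp]: "Du i fls_X_inv = 0" unfolding Du_def by (rule Dsm_der.c_X_inv)
lemma lbd_Du: "lbd f c \<Longrightarrow> lbd (Du i f) c" unfolding Du_def by (rule Dsm_der.lbd_c)
lemma Du_comm: "Du i (Du j f) = Du j (Du i f)"
  by (rule fls_eqI) (simp add: Dsm_comm)
lemma Du_power: "Du i (f ^ Suc n) = of_nat (Suc n) * f ^ n * Du i f"
  unfolding Du_def by (rule Dsm_der.c_power)

section \<open>k-derivative (reflected)\<close>

definition Dk :: "fs \<Rightarrow> fs" where "Dk f = - (fls_X ^ 2 * fls_deriv f)"

lemma Dk_nth: "Dk f $$ n = - (of_int (n - 1) * f $$ (n - 1))"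
  by (simp add: Dk_def fls_X_power_times_conv_shift algebra_simps)

lemma Dk_add [simp]: "Dk (f + g) = Dk f + Dk g" by (simp add: Dk_def algebra_simps)
lemma Dk_diff [simp]: "Dk (f - g) = Dk f - Dk g" by (simp add: Dk_def algebra_simps)
lemma Dk_uminus [simp]: "Dk (- f) = - Dk f" by (simp add: Dk_def)
lemma Dk_mult [simp]: "Dk (f * g) = Dk f * g + f * Dk g" by (simp add: Dk_def algebra_simps)
lemma Dk_const [simp]: "Dk (fls_const a) = 0" by (simp add: Dk_def)
lemma Dk_one [simp]: "Dk 1 = 0" by (simp add: Dk_def)
lemma Dk_zero [simp]: "Dk 0 = 0" by (simp add: Dk_def)
lemma Dk_X_inv: "Dk fls_X_inv = 1"
proof -
  have "Dk fls_X_inv = (fls_X * fls_X_inv)^2" by (simp add: Dk_def power_mult_distrib)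
  then show ?thesis by (simp add: X_X_inv)
qed
lemma Dk_X: "Dk fls_X = - (fls_X ^ 2)" by (simp add: Dk_def)
lemma Dk_sum: "Dk (\<Sum>x\<in>A. f x) = (\<Sum>x\<in>A. Dk (f x))"
  by (induction A rule: infinite_finite_induct) simp_all
lemma Dk_power: "Dk (f ^ Suc n) = of_nat (Suc n) * f ^ n * Dk f"
  by (induction n) (simp_all add: algebra_simps)
lemma Du_Dk: "Du i (Dk f) = Dk (Du i f)"
  by (rule fls_eqI) (simp add: Dk_nth)
lemma lbd_Dk: "lbd f c \<Longrightarrow> lbd (Dk f) (c + 1)"
  by (simp add: lbd_def Dk_nth)
lemma lbd_Dk0: "lbd f 0 \<Longrightarrow> lbd (Dk f) 2"
proof -
  assume a: "lbd f 0"
  show "lbd (Dk f) 2" unfolding lbd_def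
  proof (intro allI impI)
    fix n :: int assume "n < 2"
    then have "n - 1 < 0 \<or> n - 1 = 0" by auto
    then show "Dk f $$ n = 0" using a by (auto simp: Dk_nth lbd_def)
  qed
qed


definition Pbr :: "fs \<Rightarrow> fs \<Rightarrow> fs" where "Pbr f g = Dk f * Du vx g - Du vx f * Dk g"

lemma Pbr_add_right: "Pbr f (g + h) = Pbr f g + Pbr f h" by (simp add: Pbr_def algebra_simps)
lemma Pbr_add_left: "Pbr (g + h) f = Pbr g f + Pbr h f" by (simp add: Pbr_def algebra_simps)
lemma Pbr_diff_right: "Pbr f (g - h) = Pbr f g - Pbr f h" by (simp add: Pbr_def algebra_simps)
lemma Pbr_diff_left: "Pbr (g - h) f = Pbr g f - Pbr h f" by (simp add: Pbr_def algebra_simps)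
lemma Pbr_uminus_right: "Pbr f (- g) = - Pbr f g" by (simp add: Pbr_def algebra_simps)
lemma Pbr_uminus_left: "Pbr (- g) f = - Pbr g f" by (simp add: Pbr_def algebra_simps)
lemma Pbr_zero_right [simp]: "Pbr f 0 = 0" by (simp add: Pbr_def)
lemma Pbr_zero_left [simp]: "Pbr 0 f = 0" by (simp add: Pbr_def)
lemma Pbr_sum_right: "Pbr f (\<Sum>x\<in>A. g x) = (\<Sum>x\<in>A. Pbr f (g x))"
  by (induction A rule: infinite_finite_induct) (simp_all add: Pbr_add_right)
lemma Pbr_sum_left: "Pbr (\<Sum>x\<in>A. g x) f = (\<Sum>x\<in>A. Pbr (g x) f)"
  by (induction A rule: infinite_finite_induct) (simp_all add: Pbr_add_left)
lemma Pbr_mult_right: "Pbr f (g * h) = Pbr f g * h + g * Pbr f h" by (simp add: Pbr_def algebra_simps)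
lemma Pbr_mult_left: "Pbr (g * h) f = Pbr g f * h + g * Pbr h f" by (simp add: Pbr_def algebra_simps)
lemma Pbr_anti: "Pbr f g = - Pbr g f" by (simp add: Pbr_def algebra_simps)
lemma Pbr_self [simp]: "Pbr f f = 0" by (simp add: Pbr_def algebra_simps)
lemma Pbr_const_right: "Pbr f (fls_const c) = Dk f * fls_const (Dsm vx c)" by (simp add: Pbr_def)
lemma Pbr_const_left: "Pbr (fls_const c) f = - (fls_const (Dsm vx c) * Dk f)" by (simp add: Pbr_def)
lemma Pbr_one_right [simp]: "Pbr f 1 = 0" by (simp add: Pbr_def)
lemma Pbr_cst_right: "Pbr f (fls_const (cst r) * g) = fls_const (cst r) * Pbr f g"
  by (simp add: Pbr_mult_right Pbr_const_right)
lemma Pbr_cst_left: "Pbr (fls_const (cst r) * g) f = fls_const (cst r) * Pbr g f"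
  by (simp add: Pbr_mult_left Pbr_const_left)
lemma Du_Pbr: "Du i (Pbr f g) = Pbr (Du i f) g + Pbr f (Du i g)"
  by (simp add: Pbr_def Du_Dk Du_comm[of i vx] algebra_simps)
lemma Dk_Pbr: "Dk (Pbr f g) = Pbr (Dk f) g + Pbr f (Dk g)"
  by (simp add: Pbr_def Du_Dk algebra_simps)
lemma Jacobi: "Pbr f (Pbr g h) = Pbr (Pbr f g) h + Pbr g (Pbr f h)"
  by (simp add: Pbr_def Du_Dk algebra_simps)

lemma lbd_Pbr:
  assumes "lbd f a" "lbd g b" shows "lbd (Pbr f g) (a + b + 1)"
proof -
  have 1: "lbd (Dk f * Du vx g) (a + 1 + b)" by (rule lbd_mult[OF lbd_Dk[OF assms(1)] lbd_Du[OF assms(2)]])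
  have 2: "lbd (Du vx f * Dk g) (a + (b + 1))" by (rule lbd_mult[OF lbd_Du[OF assms(1)] lbd_Dk[OF assms(2)]])
  have "a + 1 + b = a + b + 1" "a + (b + 1) = a + b + 1" by simp_all
  with 1 2 show ?thesis unfolding Pbr_def by (metis lbd_diff)
qed

lemma lbd_Pbr0: "lbd f 0 \<Longrightarrow> lbd g c \<Longrightarrow> lbd (Pbr f g) (c + 1)"
  using lbd_Pbr[of f 0 g c] by simp

lemma le_natI: "c + int j \<le> n \<Longrightarrow> j \<le> nat (n - c)"
  by (simp add: le_nat_iff)
lemma le_natI2: "c + int m + int j \<le> n \<Longrightarrow> j \<le> nat (n - c)"
  by (simp add: le_nat_iff)
lemma gt_natD: "nat (n - c) < m + j \<Longrightarrow> n < c + int m + int j"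
  by linarith

definition cvc :: "(nat \<Rightarrow> fs) \<Rightarrow> int \<Rightarrow> bool" where
  "cvc S c \<longleftrightarrow> (\<forall>m. lbd (S m) (c + int m))"

definition ssum :: "(nat \<Rightarrow> fs) \<Rightarrow> fs" where
  "ssum S = Abs_fls (\<lambda>n. \<Sum>m\<in>{m. S m $$ n \<noteq> 0}. S m $$ n)"

lemma cvcD: "cvc S c \<Longrightarrow> n < c + int m \<Longrightarrow> S m $$ n = 0"
  by (simp add: cvc_def lbd_def)

lemma cvc_mono: "cvc S c \<Longrightarrow> d \<le> c \<Longrightarrow> cvc S d"
  unfolding cvc_def using lbd_mono by (meson add_right_mono)

lemma ssum_nth_set:
  assumes "cvc S c" "finite M" "{m. c + int m \<le> n} \<subseteq> M"
  shows "ssum S $$ n = (\<Sum>m\<in>M. S m $$ n)"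
proof -
  have supp: "{m. S m $$ k \<noteq> 0} \<subseteq> {m. c + int m \<le> k}" for k
    using cvcD[OF assms(1)] by (auto simp: not_le[symmetric])
  have "ssum S $$ n = (\<Sum>m\<in>{m. S m $$ n \<noteq> 0}. S m $$ n)"
    unfolding ssum_def
  proof (rule nth_Abs_fls_lower_bound[of c])
    show "\<forall>k<c. (\<Sum>m\<in>{m. S m $$ k \<noteq> 0}. S m $$ k) = 0"
    proof (intro allI impI)
      fix k assume "k < c"
      then have "{m. S m $$ k \<noteq> 0} = {}" using supp[of k] by auto
      then show "(\<Sum>m\<in>{m. S m $$ k \<noteq> 0}. S m $$ k) = 0" by simp
    qed
  qed
  also have "\<dots> = (\<Sum>m\<in>M. S m $$ n)"
    by (rule sum.mono_neutral_left) (use assms(2,3) supp[of n] in auto)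
  finally show ?thesis .
qed

lemma ssum_nth: "cvc S c \<Longrightarrow> ssum S $$ n = (\<Sum>m\<le>nat (n - c). S m $$ n)"
  by (rule ssum_nth_set) auto

lemma lbd_ssum: "cvc S c \<Longrightarrow> lbd (ssum S) c"
  unfolding lbd_def using ssum_nth_set[of S c "{}"] by auto

lemma cvc_add: "cvc S c \<Longrightarrow> cvc T c \<Longrightarrow> cvc (\<lambda>m. S m + T m) c"
  by (simp add: cvc_def lbd_add)
lemma cvc_diff: "cvc S c \<Longrightarrow> cvc T c \<Longrightarrow> cvc (\<lambda>m. S m - T m) c"
  by (simp add: cvc_def lbd_diff)
lemma cvc_uminus: "cvc S c \<Longrightarrow> cvc (\<lambda>m. - S m) c"
  by (simp add: cvc_def lbd_uminus)
lemma cvc_mult_left: "lbd f a \<Longrightarrow> cvc S c \<Longrightarrow> cvc (\<lambda>m. f * S m) (a + c)"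
  unfolding cvc_def using lbd_mult by (metis add.assoc)
lemma cvc_zero: "cvc (\<lambda>m. 0) c" by (simp add: cvc_def)
lemma cvc_Du: "cvc S c \<Longrightarrow> cvc (\<lambda>m. Du i (S m)) c" by (simp add: cvc_def lbd_Du)
lemma cvc_Dk: "cvc S c \<Longrightarrow> cvc (\<lambda>m. Dk (S m)) (c + 1)"
  unfolding cvc_def using lbd_Dk by (metis add.commute add.left_commute)

lemma ssum_add: "cvc S c \<Longrightarrow> cvc T c \<Longrightarrow> ssum (\<lambda>m. S m + T m) = ssum S + ssum T"
  by (rule fls_eqI) (simp add: ssum_nth[of S c] ssum_nth[of T c] ssum_nth[OF cvc_add] sum.distrib)
lemma ssum_diff: "cvc S c \<Longrightarrow> cvc T c \<Longrightarrow> ssum (\<lambda>m. S m - T m) = ssum S - ssum T"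
  by (rule fls_eqI) (simp add: ssum_nth[of S c] ssum_nth[of T c] ssum_nth[OF cvc_diff] sum_subtractf)
lemma ssum_uminus: "cvc S c \<Longrightarrow> ssum (\<lambda>m. - S m) = - ssum S"
  by (rule fls_eqI) (simp add: ssum_nth[of S c] ssum_nth[OF cvc_uminus] sum_negf)
lemma ssum_zero [simp]: "ssum (\<lambda>m. 0) = 0"
  by (rule fls_eqI) (simp add: ssum_nth[OF cvc_zero[of 0]])
lemma ssum_cong: "(\<And>m. S m = T m) \<Longrightarrow> ssum S = ssum T" by metis

lemma ssum_mult_left:
  assumes "cvc S c" "lbd f a"
  shows "f * ssum S = ssum (\<lambda>m. f * S m)"
proof (rule fls_eqI)
  fix n
  define I where "I = {a..n-c}"
  define M where "M = {..nat (n - a - c)}"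
  have fin: "finite I" "finite M" by (auto simp: I_def M_def)
  have "(f * ssum S) $$ n = (\<Sum>i\<in>I. f $$ i * ssum S $$ (n - i))"
    by (rule mult_nth_set[OF assms(2) lbd_ssum[OF assms(1)]]) (auto simp: I_def)
  also have "\<dots> = (\<Sum>i\<in>I. f $$ i * (\<Sum>m\<in>M. S m $$ (n - i)))"
  proof (rule sum.cong[OF refl])
    fix i assume "i \<in> I"
    then have "{m. c + int m \<le> n - i} \<subseteq> M" by (auto simp: I_def M_def)
    then show "f $$ i * ssum S $$ (n - i) = f $$ i * (\<Sum>m\<in>M. S m $$ (n - i))"
      using ssum_nth_set[OF assms(1) fin(2)] by simp
  qed
  also have "\<dots> = (\<Sum>m\<in>M. \<Sum>i\<in>I. f $$ i * S m $$ (n - i))"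
    by (simp add: sum_distrib_left sum.swap[of _ M])
  also have "\<dots> = (\<Sum>m\<in>M. (f * S m) $$ n)"
  proof (rule sum.cong[OF refl])
    fix m assume "m \<in> M"
    have l: "lbd (S m) (c + int m)" using assms(1) by (simp add: cvc_def)
    show "(\<Sum>i\<in>I. f $$ i * S m $$ (n - i)) = (f * S m) $$ n"
      by (rule mult_nth_set[OF assms(2) l fin(1), symmetric]) (auto simp: I_def)
  qed
  also have "\<dots> = ssum (\<lambda>m. f * S m) $$ n"
    by (rule ssum_nth_set[OF cvc_mult_left[OF assms(2,1)] fin(2), symmetric]) (auto simp: M_def)
  finally show "(f * ssum S) $$ n = ssum (\<lambda>m. f * S m) $$ n" .
qed

lemma ssum_mult_right: "cvc S c \<Longrightarrow> lbd f a \<Longrightarrow> ssum S * f = ssum (\<lambda>m. S m * f)"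
  using ssum_mult_left[of S c f a] by (simp add: mult.commute)

lemma Du_ssum: "cvc S c \<Longrightarrow> Du i (ssum S) = ssum (\<lambda>m. Du i (S m))"
  by (rule fls_eqI) (simp add: ssum_nth[of S c] ssum_nth[OF cvc_Du] Dsm_sum)

lemma Dk_ssum: "cvc S c \<Longrightarrow> Dk (ssum S) = ssum (\<lambda>m. Dk (S m))"
proof (rule fls_eqI)
  fix n assume a: "cvc S c"
  have "Dk (ssum S) $$ n = - (of_int (n - 1) * (\<Sum>m\<le>nat (n - 1 - c). S m $$ (n - 1)))"
    by (simp add: Dk_nth ssum_nth[OF a])
  also have "\<dots> = (\<Sum>m\<le>nat (n - (c + 1)). Dk (S m) $$ n)"
  proof -
    have "nat (n - 1 - c) = nat (n - (c + 1))" by simp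
    then show ?thesis by (simp add: Dk_nth sum_distrib_left sum_negf)
  qed
  also have "\<dots> = ssum (\<lambda>m. Dk (S m)) $$ n"
    by (simp add: ssum_nth[OF cvc_Dk[OF a]])
  finally show "Dk (ssum S) $$ n = ssum (\<lambda>m. Dk (S m)) $$ n" .
qed

lemma cvc_Pbr_right: "lbd f a \<Longrightarrow> cvc S c \<Longrightarrow> cvc (\<lambda>m. Pbr f (S m)) (a + c + 1)"
  unfolding cvc_def using lbd_Pbr by (metis add.assoc add.commute)
lemma cvc_Pbr_left: "lbd f a \<Longrightarrow> cvc S c \<Longrightarrow> cvc (\<lambda>m. Pbr (S m) f) (a + c + 1)"
  unfolding cvc_def using lbd_Pbr by (metis add.assoc add.commute add.left_commute)

lemma Pbr_ssum_right:
  assumes "cvc S c" "lbd f a"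
  shows "Pbr f (ssum S) = ssum (\<lambda>m. Pbr f (S m))"
proof -
  have c1: "cvc (\<lambda>m. Dk f * Du vx (S m)) (a + 1 + c)"
    by (rule cvc_mult_left[OF lbd_Dk[OF assms(2)] cvc_Du[OF assms(1)]])
  have c2: "cvc (\<lambda>m. Du vx f * Dk (S m)) (a + 1 + c)"
    using cvc_mult_left[OF lbd_Du[OF assms(2)] cvc_Dk[OF assms(1)]] by (simp add: algebra_simps)
  have "Pbr f (ssum S) = ssum (\<lambda>m. Dk f * Du vx (S m)) - ssum (\<lambda>m. Du vx f * Dk (S m))"
    unfolding Pbr_def Du_ssum[OF assms(1)] Dk_ssum[OF assms(1)]
    by (simp add: ssum_mult_left[OF cvc_Du[OF assms(1)] lbd_Dk[OF assms(2)]]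
                  ssum_mult_left[OF cvc_Dk[OF assms(1)] lbd_Du[OF assms(2)]])
  also have "\<dots> = ssum (\<lambda>m. Pbr f (S m))"
    unfolding Pbr_def by (rule ssum_diff[OF c1 c2, symmetric])
  finally show ?thesis .
qed

lemma Pbr_ssum_left:
  assumes "cvc S c" "lbd f a"
  shows "Pbr (ssum S) f = ssum (\<lambda>m. Pbr (S m) f)"
proof -
  have "Pbr (ssum S) f = - ssum (\<lambda>m. Pbr f (S m))"
    by (subst Pbr_anti) (simp add: Pbr_ssum_right[OF assms])
  also have "\<dots> = ssum (\<lambda>m. - Pbr f (S m))"
    by (rule ssum_uminus[OF cvc_Pbr_right[OF assms(2,1)], symmetric])
  finally show ?thesis by (simp add: Pbr_anti[of f])
qed

lemma ssum_shift:
  assumes "cvc S c"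
  shows "ssum S = S 0 + ssum (\<lambda>m. S (Suc m))"
proof (rule fls_eqI)
  fix n
  have c': "cvc (\<lambda>m. S (Suc m)) (c + 1)" unfolding cvc_def
  proof
    fix m
    from assms have "lbd (S (Suc m)) (c + int (Suc m))" unfolding cvc_def by blast
    then show "lbd (S (Suc m)) (c + 1 + int m)" by (simp add: algebra_simps)
  qed
  define K where "K = nat (n - c)"
  have "ssum S $$ n = (\<Sum>m\<in>{..Suc K}. S m $$ n)"
    by (rule ssum_nth_set[OF assms]) (auto simp: K_def)
  also have "\<dots> = S 0 $$ n + (\<Sum>m\<in>{..K}. S (Suc m) $$ n)"
    by (simp only: sum.atMost_Suc_shift)
  also have "(\<Sum>m\<in>{..K}. S (Suc m) $$ n) = ssum (\<lambda>m. S (Suc m)) $$ n"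
    by (rule ssum_nth_set[OF c', symmetric]) (auto simp: K_def)
  finally show "ssum S $$ n = (S 0 + ssum (\<lambda>m. S (Suc m))) $$ n" by simp
qed

lemma ssum_single0: "ssum (\<lambda>m. if m = 0 then f else 0) = f"
proof -
  have c: "cvc (\<lambda>m. if m = 0 then f else 0) (fls_subdegree f)"
    by (auto simp: cvc_def lbd_def)
  show ?thesis using ssum_shift[OF c] by simp
qed

lemma ssum_fubini_nth:
  assumes F: "\<And>m j. lbd (F m j) (c + int m + int j)"
  shows "ssum (\<lambda>m. ssum (\<lambda>j. F m j)) $$ n = ssum (\<lambda>k. \<Sum>m\<le>k. F m (k - m)) $$ n"
proof -
  have ci: "cvc (\<lambda>j. F m j) (c + int m)" for m using F by (simp add: cvc_def)
  have co: "cvc (\<lambda>m. ssum (\<lambda>j. F m j)) c"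
    unfolding cvc_def using lbd_ssum[OF ci] by blast
  have cr: "cvc (\<lambda>n. \<Sum>m\<le>n. F m (n - m)) c"
    unfolding cvc_def
  proof (intro allI lbd_sum)
    fix k m :: nat assume "m \<in> {..k}"
    then have "c + int m + int (k - m) = c + int k" by auto
    then show "lbd (F m (k - m)) (c + int k)" using F[of m "k - m"] by simp
  qed
  define K where "K = nat (n - c)"
  have "ssum (\<lambda>m. ssum (\<lambda>j. F m j)) $$ n = (\<Sum>m\<le>K. ssum (\<lambda>j. F m j) $$ n)"
    by (rule ssum_nth_set[OF co]) (auto simp: K_def intro: le_natI)
  also have "\<dots> = (\<Sum>m\<le>K. \<Sum>j\<le>K. F m j $$ n)"
  proof (rule sum.cong[OF refl])
    fix m assume "m \<in> {..K}"
    show "ssum (\<lambda>j. F m j) $$ n = (\<Sum>j\<le>K. F m j $$ n)"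
      by (rule ssum_nth_set[OF ci]) (auto simp: K_def intro: le_natI2)
  qed
  also have "\<dots> = (\<Sum>(m, j)\<in>{..K} \<times> {..K}. F m j $$ n)"
    by (rule sum.cartesian_product)
  also have "\<dots> = (\<Sum>(m, j)\<in>{(m, j). m + j \<le> K}. F m j $$ n)"
  proof (rule sum.mono_neutral_right)
    show "\<forall>x\<in>{..K} \<times> {..K} - {(m, j). m + j \<le> K}. (case x of (m, j) \<Rightarrow> F m j $$ n) = 0"
    proof
      fix x assume "x \<in> {..K} \<times> {..K} - {(m, j). m + j \<le> K}"
      then obtain m j where x: "x = (m, j)" "m + j > K" by auto
      then have "n < c + int m + int j" unfolding K_def by (intro gt_natD)
      then show "(case x of (m, j) \<Rightarrow> F m j $$ n) = 0" using lbdD[OF F[of m j]] x by simp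
    qed
    show "finite ({..K} \<times> {..K})" by simp
    show "{(m, j). m + j \<le> K} \<subseteq> {..K} \<times> {..K}" by auto
  qed
  also have "\<dots> = (\<Sum>k\<le>K. \<Sum>m\<le>k. F m (k - m) $$ n)"
    by (rule sum.triangle_reindex_eq)
  also have "\<dots> = (\<Sum>k\<le>K. (\<Sum>m\<le>k. F m (k - m)) $$ n)"
    by (simp add: fls_nth_sum)
  also have "\<dots> = ssum (\<lambda>n. \<Sum>m\<le>n. F m (n - m)) $$ n"
    by (rule ssum_nth_set[OF cr, symmetric]) (auto simp: K_def intro: le_natI)
  finally show ?thesis .
qed

lemma ssum_fubini:
  assumes F: "\<And>m j. lbd (F m j) (c + int m + int j)"
  shows "ssum (\<lambda>m. ssum (\<lambda>j. F m j)) = ssum (\<lambda>n. \<Sum>m\<le>n. F m (n - m))"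
  by (rule fls_eqI) (rule ssum_fubini_nth[OF F])


unbundle fps_syntax

abbreviation sc :: "real \<Rightarrow> fs \<Rightarrow> fs" where "sc r x \<equiv> fls_const (cst r) * x"

lemma sc_sc: "sc a (sc b x) = sc (a * b) x"
  by (simp add: mult.assoc[symmetric] fls_const_mult_const cst_mult)
lemma sc_add_right: "sc a (x + y) = sc a x + sc a y" by (simp add: distrib_left)
lemma sc_diff_right: "sc a (x - y) = sc a x - sc a y" by (simp add: right_diff_distrib)
lemma sc_add_left: "sc a x + sc b x = sc (a + b) x"
  by (simp add: distrib_right[symmetric] fls_plus_const cst_add)
lemma sc_one [simp]: "sc 1 x = x" by simp
lemma sc_zero [simp]: "sc 0 x = 0" by simp
lemma sc_zero_right [simp]: "sc r 0 = 0" by simp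
lemma of_nat_sc: "of_nat n * x = sc (real n) x" by (simp add: fls_of_nat of_nat_sm)
lemma sc_sum_right: "sc a (\<Sum>x\<in>A. f x) = (\<Sum>x\<in>A. sc a (f x))" by (simp add: sum_distrib_left)
lemma sc_mult_left: "sc a x * y = sc a (x * y)" by (simp add: mult.assoc)
lemma sc_mult_right: "x * sc a y = sc a (x * y)" by (simp add: mult.left_commute)
lemma lbd_sc: "lbd x c \<Longrightarrow> lbd (sc r x) c" using lbd_mult[OF lbd_const, of x c "cst r"] by simp
lemma Du_sc: "Du i (sc r x) = sc r (Du i x)" by simp
lemma Dk_sc: "Dk (sc r x) = sc r (Dk x)" by simp
lemma cvc_sc: "cvc S c \<Longrightarrow> cvc (\<lambda>m. sc (a m) (S m)) c"
  unfolding cvc_def using lbd_sc by blast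

lemma Ap_add: "(Pbr \<phi> ^^ m) (x + y) = (Pbr \<phi> ^^ m) x + (Pbr \<phi> ^^ m) y"
  by (induction m) (simp_all add: Pbr_add_right)
lemma Ap_diff: "(Pbr \<phi> ^^ m) (x - y) = (Pbr \<phi> ^^ m) x - (Pbr \<phi> ^^ m) y"
  by (induction m) (simp_all add: Pbr_diff_right)
lemma Ap_zero [simp]: "(Pbr \<phi> ^^ m) 0 = 0"
  by (induction m) simp_all
lemma Ap_sc: "(Pbr \<phi> ^^ m) (sc r x) = sc r ((Pbr \<phi> ^^ m) x)"
  by (induction m) (simp_all add: Pbr_cst_right)
lemma Ap_of_nat: "(Pbr \<phi> ^^ m) (of_nat c * x) = of_nat c * (Pbr \<phi> ^^ m) x"
  by (simp add: of_nat_sc Ap_sc)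
lemma Ap_sum: "(Pbr \<phi> ^^ m) (\<Sum>x\<in>A. f x) = (\<Sum>x\<in>A. (Pbr \<phi> ^^ m) (f x))"
  by (induction A rule: infinite_finite_induct) (simp_all add: Ap_add)
lemma Ap_one: "Pbr \<phi> ((Pbr \<phi> ^^ m) 1) = 0"
  by (induction m) simp_all
lemma lbd_Ap: "lbd \<phi> 0 \<Longrightarrow> lbd x c \<Longrightarrow> lbd ((Pbr \<phi> ^^ m) x) (c + int m)"
proof (induction m)
  case 0 then show ?case by simp
next
  case (Suc m)
  then have "lbd (Pbr \<phi> ((Pbr \<phi> ^^ m) x)) (c + int m + 1)" by (intro lbd_Pbr0) auto
  then show ?case by (simp add: algebra_simps)
qed

definition ExpA :: "fs \<Rightarrow> fs \<Rightarrow> fs" where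
  "ExpA \<phi> X = ssum (\<lambda>m. sc (1 / fact m) ((Pbr \<phi> ^^ m) X))"
definition Nab :: "nat \<Rightarrow> fs \<Rightarrow> fs" where
  "Nab i \<phi> = ssum (\<lambda>m. sc (1 / fact (Suc m)) ((Pbr \<phi> ^^ m) (Du i \<phi>)))"

lemma cvc_Ap: "lbd \<phi> 0 \<Longrightarrow> lbd X c \<Longrightarrow> cvc (\<lambda>m. (Pbr \<phi> ^^ m) X) c"
  unfolding cvc_def using lbd_Ap by blast
lemma cvc_Exp: "lbd \<phi> 0 \<Longrightarrow> lbd X c \<Longrightarrow> cvc (\<lambda>m. sc (a m) ((Pbr \<phi> ^^ m) X)) c"
  by (rule cvc_sc[OF cvc_Ap])
lemma lbd_ExpA: "lbd \<phi> 0 \<Longrightarrow> lbd X c \<Longrightarrow> lbd (ExpA \<phi> X) c"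
  unfolding ExpA_def by (rule lbd_ssum[OF cvc_Exp])
lemma lbd_Nab: "lbd \<phi> 0 \<Longrightarrow> lbd (Nab i \<phi>) 0"
  unfolding Nab_def by (rule lbd_ssum[OF cvc_Exp[OF _ lbd_Du]])

lemma ExpA_add:
  assumes "lbd \<phi> 0" "lbd X c" "lbd Y c"
  shows "ExpA \<phi> (X + Y) = ExpA \<phi> X + ExpA \<phi> Y"
  unfolding ExpA_def Ap_add sc_add_right
  by (rule ssum_add[OF cvc_Exp[OF assms(1,2)] cvc_Exp[OF assms(1,3)]])

lemma ExpA_diff:
  assumes "lbd \<phi> 0" "lbd X c" "lbd Y c"
  shows "ExpA \<phi> (X - Y) = ExpA \<phi> X - ExpA \<phi> Y"
  unfolding ExpA_def Ap_diff sc_diff_right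
  by (rule ssum_diff[OF cvc_Exp[OF assms(1,2)] cvc_Exp[OF assms(1,3)]])

lemma ExpA_sc:
  assumes "lbd \<phi> 0" "lbd X c"
  shows "ExpA \<phi> (sc r X) = sc r (ExpA \<phi> X)"
proof -
  have "sc r (ExpA \<phi> X) = ssum (\<lambda>m. sc r (sc (1 / fact m) ((Pbr \<phi> ^^ m) X)))"
    unfolding ExpA_def by (rule ssum_mult_left[OF cvc_Exp[OF assms] lbd_const])
  also have "\<dots> = ExpA \<phi> (sc r X)"
    unfolding ExpA_def Ap_sc sc_sc by (simp add: mult.commute)
  finally show ?thesis by simp
qed

lemma ExpA_split:
  assumes "lbd \<phi> 0" "lbd X c"
  shows "ExpA \<phi> X = X + ssum (\<lambda>m. sc (1 / fact (Suc m)) ((Pbr \<phi> ^^ Suc m) X))"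
  unfolding ExpA_def by (subst ssum_shift[OF cvc_Exp[OF assms]]) simp

lemma lbd_ExpA_tail:
  assumes "lbd \<phi> 0" "lbd X c"
  shows "lbd (ExpA \<phi> X - X) (c + 1)"
proof -
  have "cvc (\<lambda>m. sc (1 / fact (Suc m)) ((Pbr \<phi> ^^ Suc m) X)) (c + 1)"
    unfolding cvc_def
  proof
    fix m
    have "lbd ((Pbr \<phi> ^^ Suc m) X) (c + int (Suc m))" by (rule lbd_Ap[OF assms])
    then show "lbd (sc (1 / fact (Suc m)) ((Pbr \<phi> ^^ Suc m) X)) (c + 1 + int m)"
      by (intro lbd_sc) (simp add: algebra_simps)
  qed
  from lbd_ssum[OF this] show ?thesis using ExpA_split[OF assms] by simp
qed

lemma ExpA_one: "lbd \<phi> 0 \<Longrightarrow> ExpA \<phi> 1 = 1"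
  using ExpA_split[OF _ lbd_1, of \<phi>] by (simp add: Ap_one)

lemma ExpA_zero: "ExpA \<phi> 0 = 0"
  unfolding ExpA_def by simp

lemma binom_leibniz:
  fixes D :: "fs \<Rightarrow> fs" and T :: "nat \<Rightarrow> nat \<Rightarrow> fs"
  assumes Dadd: "\<And>x y. D (x + y) = D x + D y"
    and Dsc: "\<And>c x. D (of_nat c * x) = of_nat c * D x"
    and DT: "\<And>i j. D (T i j) = T (Suc i) j + T i (Suc j)"
  shows "(D ^^ n) (T 0 0) = (\<Sum>k\<le>n. of_nat (n choose k) * T k (n - k))"
proof (induction n)
  case 0 then show ?case by simp
next
  case (Suc n)
  have D0: "D 0 = 0" using Dadd[of 0 0] by simp
  have Dsum: "D (\<Sum>k\<in>A. f k) = (\<Sum>k\<in>A. D (f k))" for A and f :: "nat \<Rightarrow> fs"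
    by (induction A rule: infinite_finite_induct) (simp_all add: D0 Dadd)
  have "(D ^^ Suc n) (T 0 0) = D (\<Sum>k\<le>n. of_nat (n choose k) * T k (n - k))"
    using Suc by simp
  also have "\<dots> = (\<Sum>k\<le>n. of_nat (n choose k) * T (Suc k) (n - k))
                 + (\<Sum>k\<le>n. of_nat (n choose k) * T k (Suc (n - k)))"
    by (simp add: Dsum Dsc DT distrib_left sum.distrib)
  also have "(\<Sum>k\<le>n. of_nat (n choose k) * T k (Suc (n - k)))
      = (\<Sum>k\<le>Suc n. of_nat (n choose k) * T k (Suc n - k))"
  proof -
    have "(\<Sum>k\<le>Suc n. of_nat (n choose k) * T k (Suc n - k))
        = (\<Sum>k\<le>n. of_nat (n choose k) * T k (Suc n - k))"
      by (simp add: sum.atMost_Suc binomial_eq_0)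
    also have "\<dots> = (\<Sum>k\<le>n. of_nat (n choose k) * T k (Suc (n - k)))"
      by (rule sum.cong) (auto simp: Suc_diff_le)
    finally show ?thesis by simp
  qed
  also have "(\<Sum>k\<le>Suc n. of_nat (n choose k) * T k (Suc n - k))
      = T 0 (Suc n) + (\<Sum>k\<le>n. of_nat (n choose Suc k) * T (Suc k) (n - k))"
    by (subst sum.atMost_Suc_shift) simp
  finally have "(D ^^ Suc n) (T 0 0) = T 0 (Suc n) + (\<Sum>k\<le>n. (of_nat (n choose k) + of_nat (n choose Suc k)) * T (Suc k) (n - k))"
    by (simp add: distrib_right sum.distrib algebra_simps)
  also have "\<dots> = (\<Sum>k\<le>Suc n. of_nat (Suc n choose k) * T k (Suc n - k))"
    by (subst sum.atMost_Suc_shift) (simp add: binomial_Suc_Suc)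
  finally show ?case .
qed

lemma choose_fact_real: "k \<le> n \<Longrightarrow> 1 / fact n * real (n choose k) = 1 / fact k * (1 / fact (n - k))"
  by (simp add: binomial_fact)
lemma choose_fact_real2: "k \<le> n \<Longrightarrow> real (n choose k) / fact n = 1 / (fact (n - k) * fact k)"
  by (simp add: binomial_fact)

locale bil =
  fixes \<beta> :: "fs \<Rightarrow> fs \<Rightarrow> fs" and \<phi> :: fs
  assumes lbd_phi: "lbd \<phi> 0"
  and add_l: "\<And>x y z. \<beta> (x + y) z = \<beta> x z + \<beta> y z"
  and add_r: "\<And>x y z. \<beta> z (x + y) = \<beta> z x + \<beta> z y"
  and sc_l: "\<And>r x y. \<beta> (sc r x) y = sc r (\<beta> x y)"
  and sc_r: "\<And>r x y. \<beta> x (sc r y) = sc r (\<beta> x y)"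
  and lbd_b: "\<And>x y a b. lbd x a \<Longrightarrow> lbd y b \<Longrightarrow> lbd (\<beta> x y) (a + b)"
  and ssum_l: "\<And>S c f a. cvc S c \<Longrightarrow> lbd f a \<Longrightarrow> \<beta> (ssum S) f = ssum (\<lambda>m. \<beta> (S m) f)"
  and ssum_r: "\<And>S c f a. cvc S c \<Longrightarrow> lbd f a \<Longrightarrow> \<beta> f (ssum S) = ssum (\<lambda>m. \<beta> f (S m))"
  and leib: "\<And>x y. Pbr \<phi> (\<beta> x y) = \<beta> (Pbr \<phi> x) y + \<beta> x (Pbr \<phi> y)"
begin

lemma Ap_beta:
  "(Pbr \<phi> ^^ n) (\<beta> F G) = (\<Sum>k\<le>n. of_nat (n choose k) * \<beta> ((Pbr \<phi> ^^ k) F) ((Pbr \<phi> ^^ (n - k)) G))"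
proof -
  have "(Pbr \<phi> ^^ n) ((\<lambda>i j. \<beta> ((Pbr \<phi> ^^ i) F) ((Pbr \<phi> ^^ j) G)) 0 0)
      = (\<Sum>k\<le>n. of_nat (n choose k) * (\<lambda>i j. \<beta> ((Pbr \<phi> ^^ i) F) ((Pbr \<phi> ^^ j) G)) k (n - k))"
    by (rule binom_leibniz) (simp_all add: Pbr_add_right of_nat_sc Pbr_cst_right leib)
  then show ?thesis by simp
qed

theorem Exp_beta:
  assumes F: "lbd F a" and G: "lbd G b"
  shows "ExpA \<phi> (\<beta> F G) = \<beta> (ExpA \<phi> F) (ExpA \<phi> G)"
proof -
  define aF where "aF i = sc (1 / fact i) ((Pbr \<phi> ^^ i) F)" for i
  define bG where "bG j = sc (1 / fact j) ((Pbr \<phi> ^^ j) G)" for j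
  have ca: "cvc aF a" unfolding aF_def by (rule cvc_Exp[OF lbd_phi F])
  have cb: "cvc bG b" unfolding bG_def by (rule cvc_Exp[OF lbd_phi G])
  have la: "lbd (aF i) (a + int i)" for i using ca by (simp add: cvc_def)
  have lb: "lbd (bG j) (b + int j)" for j using cb by (simp add: cvc_def)
  have lsb: "lbd (ssum bG) b" by (rule lbd_ssum[OF cb])
  have "\<beta> (ExpA \<phi> F) (ExpA \<phi> G) = \<beta> (ssum aF) (ssum bG)"
    unfolding ExpA_def aF_def bG_def by simp
  also have "\<dots> = ssum (\<lambda>i. \<beta> (aF i) (ssum bG))" by (rule ssum_l[OF ca lsb])
  also have "\<dots> = ssum (\<lambda>i. ssum (\<lambda>j. \<beta> (aF i) (bG j)))"
    by (rule ssum_cong) (rule ssum_r[OF cb la])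
  also have "\<dots> = ssum (\<lambda>n. \<Sum>i\<le>n. \<beta> (aF i) (bG (n - i)))"
  proof (rule ssum_fubini)
    fix i j
    show "lbd (\<beta> (aF i) (bG j)) (a + b + int i + int j)"
      using lbd_b[OF la lb] by (simp add: algebra_simps)
  qed
  also have "\<dots> = ExpA \<phi> (\<beta> F G)"
    unfolding ExpA_def
  proof (rule ssum_cong)
    fix n
    have "sc (1 / fact n) ((Pbr \<phi> ^^ n) (\<beta> F G))
        = (\<Sum>k\<le>n. sc (1 / fact n * real (n choose k)) (\<beta> ((Pbr \<phi> ^^ k) F) ((Pbr \<phi> ^^ (n - k)) G)))"
      by (simp add: Ap_beta sc_sum_right of_nat_sc sc_sc)
    also have "\<dots> = (\<Sum>k\<le>n. \<beta> (aF k) (bG (n - k)))"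
      by (rule sum.cong) (simp_all add: aF_def bG_def sc_l sc_r sc_sc choose_fact_real2)
    finally show "(\<Sum>i\<le>n. \<beta> (aF i) (bG (n - i))) = sc (1 / fact n) ((Pbr \<phi> ^^ n) (\<beta> F G))" by simp
  qed
  finally show ?thesis by simp
qed

end

lemma bil_mult: "lbd \<phi> 0 \<Longrightarrow> bil (*) \<phi>"
  by unfold_locales
    (simp_all add: distrib_left distrib_right sc_mult_left sc_mult_right lbd_mult
      ssum_mult_left ssum_mult_right Pbr_mult_right)

lemma bil_Pbr: "lbd \<phi> 0 \<Longrightarrow> bil Pbr \<phi>"
proof unfold_locales
  fix x y a b assume "lbd x a" "lbd y b"
  from lbd_Pbr[OF this] show "lbd (Pbr x y) (a + b)" by (rule lbd_mono) simp
next
  fix S c f a assume "cvc S c" "lbd f a"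
  then show "Pbr (ssum S) f = ssum (\<lambda>m. Pbr (S m) f)" by (rule Pbr_ssum_left)
next
  fix S c f a assume "cvc S c" "lbd f a"
  then show "Pbr f (ssum S) = ssum (\<lambda>m. Pbr f (S m))" by (rule Pbr_ssum_right)
next
  fix x y show "Pbr \<phi> (Pbr x y) = Pbr (Pbr \<phi> x) y + Pbr x (Pbr \<phi> y)" by (rule Jacobi)
qed (simp_all add: Pbr_add_left Pbr_add_right Pbr_cst_left Pbr_cst_right)

lemma ExpA_mult: "lbd \<phi> 0 \<Longrightarrow> lbd F a \<Longrightarrow> lbd G b \<Longrightarrow> ExpA \<phi> (F * G) = ExpA \<phi> F * ExpA \<phi> G"
  using bil.Exp_beta[OF bil_mult] by blast

lemma ExpA_Pbr: "lbd \<phi> 0 \<Longrightarrow> lbd F a \<Longrightarrow> lbd G b \<Longrightarrow> ExpA \<phi> (Pbr F G) = Pbr (ExpA \<phi> F) (ExpA \<phi> G)"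
  using bil.Exp_beta[OF bil_Pbr] by blast


lemma Du_Ap:
  "Du u ((Pbr \<phi> ^^ n) X) = (Pbr \<phi> ^^ n) (Du u X)
     + (\<Sum>i<n. (Pbr \<phi> ^^ i) (Pbr (Du u \<phi>) ((Pbr \<phi> ^^ (n - Suc i)) X)))"
proof (induction n)
  case 0 then show ?case by simp
next
  case (Suc n)
  have A: "Du u ((Pbr \<phi> ^^ Suc n) X) = Pbr (Du u \<phi>) ((Pbr \<phi> ^^ n) X) + (Pbr \<phi> ^^ Suc n) (Du u X)
      + (\<Sum>i<n. (Pbr \<phi> ^^ Suc i) (Pbr (Du u \<phi>) ((Pbr \<phi> ^^ (n - Suc i)) X)))"
    by (simp add: Du_Pbr Suc.IH Pbr_add_right Pbr_sum_right)
  have B: "(\<Sum>i<Suc n. (Pbr \<phi> ^^ i) (Pbr (Du u \<phi>) ((Pbr \<phi> ^^ (Suc n - Suc i)) X)))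
      = Pbr (Du u \<phi>) ((Pbr \<phi> ^^ n) X) + (\<Sum>i<n. (Pbr \<phi> ^^ Suc i) (Pbr (Du u \<phi>) ((Pbr \<phi> ^^ (n - Suc i)) X)))"
    by (subst sum.lessThan_Suc_shift) simp
  show ?case unfolding A B by (simp only: add.assoc add.commute add.left_commute)
qed

lemma Pbr_of_nat_right: "Pbr f (of_nat c * g) = of_nat c * Pbr f g"
  by (simp add: of_nat_sc Pbr_cst_right)

lemma comm_formula:
  "(\<Sum>i<n. (Pbr \<phi> ^^ i) (Pbr \<psi> ((Pbr \<phi> ^^ (n - Suc i)) X)))
   = (\<Sum>m<n. of_nat (n choose Suc m) * Pbr ((Pbr \<phi> ^^ m) \<psi>) ((Pbr \<phi> ^^ (n - Suc m)) X))"
proof (induction n)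
  case 0 show ?case by simp
next
  case (Suc n)
  have T: "(\<Sum>i<Suc n. (Pbr \<phi> ^^ i) (Pbr \<psi> ((Pbr \<phi> ^^ (Suc n - Suc i)) X)))
      = Pbr \<psi> ((Pbr \<phi> ^^ n) X) + Pbr \<phi> (\<Sum>i<n. (Pbr \<phi> ^^ i) (Pbr \<psi> ((Pbr \<phi> ^^ (n - Suc i)) X)))"
    by (subst sum.lessThan_Suc_shift) (simp add: Pbr_sum_right)
  have R1: "Pbr \<phi> (\<Sum>m<n. of_nat (n choose Suc m) * Pbr ((Pbr \<phi> ^^ m) \<psi>) ((Pbr \<phi> ^^ (n - Suc m)) X))
      = (\<Sum>m<n. of_nat (n choose Suc m) * Pbr ((Pbr \<phi> ^^ Suc m) \<psi>) ((Pbr \<phi> ^^ (n - Suc m)) X))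
      + (\<Sum>m<n. of_nat (n choose Suc m) * Pbr ((Pbr \<phi> ^^ m) \<psi>) ((Pbr \<phi> ^^ (n - m)) X))"
  proof -
    have e: "Pbr \<phi> ((Pbr \<phi> ^^ (n - Suc m)) X) = (Pbr \<phi> ^^ (n - m)) X" if "m < n" for m
    proof -
      have "n - m = Suc (n - Suc m)" using that by simp
      then show ?thesis by simp
    qed
    have "Pbr \<phi> (\<Sum>m<n. of_nat (n choose Suc m) * Pbr ((Pbr \<phi> ^^ m) \<psi>) ((Pbr \<phi> ^^ (n - Suc m)) X))
      = (\<Sum>m<n. of_nat (n choose Suc m) * (Pbr ((Pbr \<phi> ^^ Suc m) \<psi>) ((Pbr \<phi> ^^ (n - Suc m)) X)
           + Pbr ((Pbr \<phi> ^^ m) \<psi>) ((Pbr \<phi> ^^ (n - m)) X)))"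
      unfolding Pbr_sum_right Pbr_of_nat_right
      by (rule sum.cong[OF refl]) (simp add: Jacobi[of \<phi>] e)
    then show ?thesis by (simp add: distrib_left sum.distrib)
  qed
  have S1: "(\<Sum>m<Suc n. of_nat (n choose m) * Pbr ((Pbr \<phi> ^^ m) \<psi>) ((Pbr \<phi> ^^ (n - m)) X))
      = Pbr \<psi> ((Pbr \<phi> ^^ n) X) + (\<Sum>m<n. of_nat (n choose Suc m) * Pbr ((Pbr \<phi> ^^ Suc m) \<psi>) ((Pbr \<phi> ^^ (n - Suc m)) X))"
    by (subst sum.lessThan_Suc_shift) simp
  have S2: "(\<Sum>m<Suc n. of_nat (n choose Suc m) * Pbr ((Pbr \<phi> ^^ m) \<psi>) ((Pbr \<phi> ^^ (n - m)) X))
      = (\<Sum>m<n. of_nat (n choose Suc m) * Pbr ((Pbr \<phi> ^^ m) \<psi>) ((Pbr \<phi> ^^ (n - m)) X))"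
    by (simp add: binomial_eq_0)
  have "(\<Sum>m<Suc n. of_nat (Suc n choose Suc m) * Pbr ((Pbr \<phi> ^^ m) \<psi>) ((Pbr \<phi> ^^ (Suc n - Suc m)) X))
     = (\<Sum>m<Suc n. of_nat (n choose m) * Pbr ((Pbr \<phi> ^^ m) \<psi>) ((Pbr \<phi> ^^ (n - m)) X))
     + (\<Sum>m<Suc n. of_nat (n choose Suc m) * Pbr ((Pbr \<phi> ^^ m) \<psi>) ((Pbr \<phi> ^^ (n - m)) X))"
    by (simp only: binomial_Suc_Suc diff_Suc_Suc of_nat_add distrib_right sum.distrib)
  also have "\<dots> = Pbr \<psi> ((Pbr \<phi> ^^ n) X)
      + Pbr \<phi> (\<Sum>m<n. of_nat (n choose Suc m) * Pbr ((Pbr \<phi> ^^ m) \<psi>) ((Pbr \<phi> ^^ (n - Suc m)) X))"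
    unfolding S1 S2 R1 by (simp only: add.assoc)
  also have "\<dots> = (\<Sum>i<Suc n. (Pbr \<phi> ^^ i) (Pbr \<psi> ((Pbr \<phi> ^^ (Suc n - Suc i)) X)))"
    unfolding T Suc.IH ..
  finally show ?case by simp
qed

theorem dexp:
  assumes ph: "lbd \<phi> 0" and X: "lbd X c"
  shows "Du u (ExpA \<phi> X) = ExpA \<phi> (Du u X) + Pbr (Nab u \<phi>) (ExpA \<phi> X)"
proof -
  have ps: "lbd (Du u \<phi>) 0" by (rule lbd_Du[OF ph])
  define T where "T n = (\<Sum>i<n. (Pbr \<phi> ^^ i) (Pbr (Du u \<phi>) ((Pbr \<phi> ^^ (n - Suc i)) X)))" for n
  have DuA: "Du u ((Pbr \<phi> ^^ n) X) = (Pbr \<phi> ^^ n) (Du u X) + T n" for n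
    unfolding T_def by (rule Du_Ap)
  have lT: "lbd (T n) (c + int n)" for n
  proof -
    have "T n = Du u ((Pbr \<phi> ^^ n) X) - (Pbr \<phi> ^^ n) (Du u X)" using DuA[of n] by simp
    then show ?thesis
      using lbd_diff[OF lbd_Du[OF lbd_Ap[OF ph X]] lbd_Ap[OF ph lbd_Du[OF X]]] by simp
  qed
  have cT: "cvc (\<lambda>n. sc (1 / fact n) (T n)) c"
    unfolding cvc_def using lT lbd_sc by blast
  have cE: "cvc (\<lambda>m. sc (1 / fact m) ((Pbr \<phi> ^^ m) X)) c" by (rule cvc_Exp[OF ph X])
  have "Du u (ExpA \<phi> X) = ssum (\<lambda>n. Du u (sc (1 / fact n) ((Pbr \<phi> ^^ n) X)))"
    unfolding ExpA_def by (rule Du_ssum[OF cE])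
  also have "\<dots> = ssum (\<lambda>n. sc (1 / fact n) ((Pbr \<phi> ^^ n) (Du u X)) + sc (1 / fact n) (T n))"
    by (simp only: Du_sc DuA sc_add_right)
  also have "\<dots> = ExpA \<phi> (Du u X) + ssum (\<lambda>n. sc (1 / fact n) (T n))"
    unfolding ExpA_def by (rule ssum_add[OF cvc_Exp[OF ph lbd_Du[OF X]] cT])
  also have "ssum (\<lambda>n. sc (1 / fact n) (T n)) = Pbr (Nab u \<phi>) (ExpA \<phi> X)"
  proof -
    define G where "G m j = Pbr (sc (1 / fact (Suc m)) ((Pbr \<phi> ^^ m) (Du u \<phi>))) (sc (1 / fact j) ((Pbr \<phi> ^^ j) X))" for m j
    have lG: "lbd (G m j) (c + int m + int j)" for m j
    proof -
      have "lbd (G m j) (0 + int m + (c + int j) + 1)"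
        unfolding G_def by (intro lbd_Pbr lbd_sc lbd_Ap ph ps X)
      then show ?thesis by (rule lbd_mono) simp
    qed
    have T0: "T 0 = 0" by (simp add: T_def)
    have TS: "sc (1 / fact (Suc n)) (T (Suc n)) = (\<Sum>m\<le>n. G m (n - m))" for n
    proof -
      have "sc (1 / fact (Suc n)) (T (Suc n))
          = (\<Sum>m<Suc n. sc (1 / fact (Suc n)) (of_nat (Suc n choose Suc m) * Pbr ((Pbr \<phi> ^^ m) (Du u \<phi>)) ((Pbr \<phi> ^^ (Suc n - Suc m)) X)))"
        unfolding T_def comm_formula sc_sum_right ..
      also have "\<dots> = (\<Sum>m\<le>n. G m (n - m))"
        unfolding lessThan_Suc_atMost
      proof (rule sum.cong[OF refl])
        fix m assume "m \<in> {..n}"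
        then have mn: "Suc m \<le> Suc n" by simp
        have r2: "1 / fact (Suc n) * real (Suc n choose Suc m) = 1 / fact (n - m) * (1 / fact (Suc m))"
          using choose_fact_real[OF mn] by simp
        let ?P = "Pbr ((Pbr \<phi> ^^ m) (Du u \<phi>)) ((Pbr \<phi> ^^ (n - m)) X)"
        have lhs: "sc (1 / fact (Suc n)) (of_nat (Suc n choose Suc m) * Pbr ((Pbr \<phi> ^^ m) (Du u \<phi>)) ((Pbr \<phi> ^^ (Suc n - Suc m)) X))
            = sc (1 / fact (Suc n) * real (Suc n choose Suc m)) ?P"
          by (simp only: of_nat_sc sc_sc diff_Suc_Suc)
        have rhs: "G m (n - m) = sc (1 / fact (n - m) * (1 / fact (Suc m))) ?P"
          unfolding G_def by (simp only: Pbr_cst_left Pbr_cst_right sc_sc)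
        show "sc (1 / fact (Suc n)) (of_nat (Suc n choose Suc m) * Pbr ((Pbr \<phi> ^^ m) (Du u \<phi>)) ((Pbr \<phi> ^^ (Suc n - Suc m)) X)) = G m (n - m)"
          unfolding lhs rhs r2 ..
      qed
      finally show ?thesis .
    qed
    have "ssum (\<lambda>n. sc (1 / fact n) (T n)) = ssum (\<lambda>n. sc (1 / fact (Suc n)) (T (Suc n)))"
      using ssum_shift[OF cT] T0 by simp
    also have "\<dots> = ssum (\<lambda>n. \<Sum>m\<le>n. G m (n - m))" by (simp only: TS)
    also have "\<dots> = ssum (\<lambda>m. ssum (\<lambda>j. G m j))" by (rule ssum_fubini[OF lG, symmetric])
    also have "\<dots> = ssum (\<lambda>m. Pbr (sc (1 / fact (Suc m)) ((Pbr \<phi> ^^ m) (Du u \<phi>))) (ExpA \<phi> X))"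
    proof (rule ssum_cong)
      fix m
      have l: "lbd (sc (1 / fact (Suc m)) ((Pbr \<phi> ^^ m) (Du u \<phi>))) (0 + int m)"
        by (intro lbd_sc lbd_Ap ph ps)
      show "ssum (G m) = Pbr (sc (1 / fact (Suc m)) ((Pbr \<phi> ^^ m) (Du u \<phi>))) (ExpA \<phi> X)"
        unfolding ExpA_def G_def by (rule Pbr_ssum_right[OF cE l, symmetric])
    qed
    also have "\<dots> = Pbr (Nab u \<phi>) (ExpA \<phi> X)"
      unfolding Nab_def by (rule Pbr_ssum_left[OF cvc_Exp[OF ph ps] lbd_ExpA[OF ph X], symmetric])
    finally show ?thesis .
  qed
  finally show ?thesis .
qed


unbundle fps_syntax

definition Lf :: "fs \<Rightarrow> fs" where "Lf \<phi> = ExpA \<phi> fls_X_inv"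
definition Li :: "fs \<Rightarrow> fs" where "Li \<phi> = ExpA \<phi> fls_X"
definition Q :: "fs \<Rightarrow> nat \<Rightarrow> fs" where "Q \<phi> m = Li \<phi> ^ m"
definition Exq :: "fs \<Rightarrow> (nat \<Rightarrow> sm) \<Rightarrow> fs" where
  "Exq \<phi> a = ssum (\<lambda>m. fls_const (a m) * Q \<phi> m)"
definition dco :: "(nat \<Rightarrow> sm) \<Rightarrow> nat \<Rightarrow> sm" where
  "dco a m = (case m of 0 \<Rightarrow> 0 | Suc k \<Rightarrow> - (of_nat k * a k))"

lemma ring_help:
  fixes a b e d l x y :: "'a::comm_ring_1"
  assumes h: "a + b * (- (l * x)) = e + l * (d * y - x * b)" and ly: "l * y = 1"
  shows "a = e + d"
proof -
  have "l * (d * y - x * b) = d * (l * y) + b * (- (l * x))" by (simp add: algebra_simps)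
  also have "\<dots> = d + b * (- (l * x))" by (simp add: ly)
  finally have "a + b * (- (l * x)) = (e + d) + b * (- (l * x))" using h by (simp add: add.assoc)
  then show ?thesis by simp
qed

lemma X_inv_X: "(fls_X_inv * fls_X :: fs) = 1"
  using X_X_inv by (simp add: mult.commute)

context
  fixes \<phi> :: fs
  assumes ph: "lbd \<phi> 0"
begin

lemma Lf_Li: "Lf \<phi> * Li \<phi> = 1"
  unfolding Lf_def Li_def
  using ExpA_mult[OF ph lbd_X_inv lbd_X] ExpA_one[OF ph] X_inv_X by simp

lemma lbd_Li: "lbd (Li \<phi>) 1" unfolding Li_def by (rule lbd_ExpA[OF ph lbd_X])
lemma lbd_Lf: "lbd (Lf \<phi>) (-1)" unfolding Lf_def by (rule lbd_ExpA[OF ph lbd_X_inv])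

lemma Li_lead: "Li \<phi> $$ 1 = 1"
proof -
  have "lbd (ExpA \<phi> fls_X - fls_X) 2" using lbd_ExpA_tail[OF ph lbd_X] by simp
  then have "(ExpA \<phi> fls_X - fls_X) $$ 1 = 0" by (simp add: lbd_def)
  then show ?thesis by (simp add: Li_def)
qed

lemma lbd_Q: "lbd (Q \<phi> m) (int m)"
  unfolding Q_def using lbd_power[OF lbd_Li, of m] by simp

lemma Q_lead: "Q \<phi> m $$ int m = 1"
proof (induction m)
  case 0 then show ?case by (simp add: Q_def)
next
  case (Suc m)
  have "Q \<phi> (Suc m) = Li \<phi> * Q \<phi> m" by (simp add: Q_def)
  then have "Q \<phi> (Suc m) $$ (1 + int m) = Li \<phi> $$ 1 * Q \<phi> m $$ int m"
    using mult_nth_low[OF lbd_Li lbd_Q] by simp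
  then show ?case using Suc Li_lead by simp
qed

lemma Q0: "Q \<phi> 0 = 1" by (simp add: Q_def)

lemma lbd_cQ: "lbd (fls_const a * Q \<phi> m) (int m)"
  using lbd_mult[OF lbd_const lbd_Q, of a m] by simp

lemma cvc_Ex: "cvc (\<lambda>m. fls_const (a m) * Q \<phi> m) 0"
  unfolding cvc_def using lbd_cQ by simp

lemma lbd_Ex: "lbd (Exq \<phi> a) 0" unfolding Exq_def by (rule lbd_ssum[OF cvc_Ex])

lemma Ex_nth: "Exq \<phi> a $$ int m = (\<Sum>i\<le>m. a i * Q \<phi> i $$ int m)"
  unfolding Exq_def by (simp add: ssum_nth[OF cvc_Ex] fls_mult_const_nth)

lemma Ex_nth_split: "Exq \<phi> a $$ int m = a m + (\<Sum>i<m. a i * Q \<phi> i $$ int m)"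
  unfolding Ex_nth by (simp add: sum.atMost_Suc lessThan_Suc_atMost[symmetric] Q_lead)

lemma Ex_nth_neg: "n < 0 \<Longrightarrow> Exq \<phi> a $$ n = 0"
  using lbd_Ex by (simp add: lbd_def)

lemma Ex_add: "Exq \<phi> a + Exq \<phi> b = Exq \<phi> (\<lambda>m. a m + b m)"
  unfolding Exq_def by (simp add: ssum_add[OF cvc_Ex cvc_Ex, symmetric] distrib_right fls_plus_const[symmetric])

lemma Ex_uminus: "- Exq \<phi> a = Exq \<phi> (\<lambda>m. - a m)"
  unfolding Exq_def by (simp add: ssum_uminus[OF cvc_Ex, symmetric] fls_const_uminus)

lemma Ex_diff: "Exq \<phi> a - Exq \<phi> b = Exq \<phi> (\<lambda>m. a m - b m)"
proof -
  have "Exq \<phi> a - Exq \<phi> b = Exq \<phi> a + Exq \<phi> (\<lambda>m. - b m)" by (simp add: Ex_uminus[symmetric])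
  also have "\<dots> = Exq \<phi> (\<lambda>m. a m + - b m)" by (rule Ex_add)
  finally show ?thesis by simp
qed

lemma Ex_inj: "Exq \<phi> a = Exq \<phi> b \<Longrightarrow> a m = b m"
proof (induction m rule: less_induct)
  case (less m)
  have "Exq \<phi> a $$ int m = Exq \<phi> b $$ int m" using less.prems by simp
  then have "a m + (\<Sum>i<m. a i * Q \<phi> i $$ int m) = b m + (\<Sum>i<m. b i * Q \<phi> i $$ int m)"
    by (simp add: Ex_nth_split)
  moreover have "(\<Sum>i<m. a i * Q \<phi> i $$ int m) = (\<Sum>i<m. b i * Q \<phi> i $$ int m)"
    using less.IH less.prems by simp
  ultimately show ?case by simp
qed

lemma Ex_single: "Exq \<phi> (\<lambda>m. if m = k then c else 0) = fls_const c * Q \<phi> k"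
proof -
  have "cvc (\<lambda>m. fls_const (if m = k then c else 0) * Q \<phi> m) 0" by (rule cvc_Ex)
  show ?thesis
  proof (rule fls_eqI)
    fix n
    show "Exq \<phi> (\<lambda>m. if m = k then c else 0) $$ n = (fls_const c * Q \<phi> k) $$ n"
    proof (cases "n < 0")
      case True
      then show ?thesis using lbd_cQ[of c k] Ex_nth_neg[OF True] by (simp add: lbd_def)
    next
      case False
      then obtain m where m: "n = int m" by (metis nonneg_int_cases not_less)
      have sd: "(\<Sum>i\<le>m. (if i = k then c else 0) * Q \<phi> i $$ int m) = (\<Sum>i\<le>m. if i = k then c * Q \<phi> i $$ int m else 0)"
        by (rule sum.cong) auto
      show ?thesis
      proof (cases "k \<le> m")
        case True
        then show ?thesis unfolding m Ex_nth sd by (simp add: fls_mult_const_nth)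
      next
        case False
        then have "(fls_const c * Q \<phi> k) $$ int m = 0" using lbd_cQ[of c k] by (simp add: lbd_def)
        then show ?thesis unfolding m Ex_nth sd using False by simp
      qed
    qed
  qed
qed

lemma Ex_0coef: "Exq \<phi> a $$ 0 = a 0"
  using Ex_nth_split[of a 0] by simp

primrec ecl :: "fs \<Rightarrow> nat \<Rightarrow> sm list" where
  "ecl F 0 = []"
| "ecl F (Suc n) = ecl F n @ [F $$ int n - (\<Sum>i<n. (ecl F n ! i) * Q \<phi> i $$ int n)]"

lemma ecl_len: "length (ecl F n) = n"
  by (induction n) simp_all

lemma ecl_stable: "i < n \<Longrightarrow> ecl F n ! i = ecl F (Suc i) ! i"
proof (induction n)
  case 0 then show ?case by simp
next
  case (Suc n)
  then show ?case
    by (cases "i < n") (auto simp: nth_append ecl_len less_Suc_eq)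
qed

lemma Ex_exists:
  assumes F: "lbd F 0"
  shows "F = Exq \<phi> (\<lambda>m. ecl F (Suc m) ! m)"
proof (rule fls_eqI)
  fix n
  define a where "a m = ecl F (Suc m) ! m" for m
  have a_rec: "a m = F $$ int m - (\<Sum>i<m. a i * Q \<phi> i $$ int m)" for m
  proof -
    have "a m = F $$ int m - (\<Sum>i<m. (ecl F m ! i) * Q \<phi> i $$ int m)"
      unfolding a_def by (simp add: nth_append ecl_len)
    also have "(\<Sum>i<m. (ecl F m ! i) * Q \<phi> i $$ int m) = (\<Sum>i<m. a i * Q \<phi> i $$ int m)"
      by (rule sum.cong) (simp_all add: a_def ecl_stable)
    finally show ?thesis .
  qed
  show "F $$ n = Exq \<phi> (\<lambda>m. ecl F (Suc m) ! m) $$ n"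
  proof (cases "n < 0")
    case True
    then show ?thesis using F Ex_nth_neg by (simp add: lbd_def)
  next
    case False
    then obtain m where m: "n = int m" by (metis nonneg_int_cases not_less)
    show ?thesis unfolding m Ex_nth_split a_def[symmetric] using a_rec[of m] by simp
  qed
qed

lemma Du_Li: "Du i (Li \<phi>) = - (Li \<phi> ^ 2 * Du i (Lf \<phi>))"
proof -
  have "Du i (Lf \<phi> * Li \<phi>) = 0" using Lf_Li by simp
  then have "Du i (Lf \<phi>) * Li \<phi> + Lf \<phi> * Du i (Li \<phi>) = 0" by simp
  then have "Li \<phi> * (Du i (Lf \<phi>) * Li \<phi> + Lf \<phi> * Du i (Li \<phi>)) = 0" by simp
  then have "Li \<phi> ^ 2 * Du i (Lf \<phi>) + (Lf \<phi> * Li \<phi>) * Du i (Li \<phi>) = 0"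
    by (simp add: algebra_simps power2_eq_square)
  then show ?thesis using Lf_Li by (simp add: eq_neg_iff_add_eq_0 add.commute)
qed

lemma Dk_Li: "Dk (Li \<phi>) = - (Li \<phi> ^ 2 * Dk (Lf \<phi>))"
proof -
  have "Dk (Lf \<phi> * Li \<phi>) = 0" using Lf_Li by simp
  then have "Dk (Lf \<phi>) * Li \<phi> + Lf \<phi> * Dk (Li \<phi>) = 0" by simp
  then have "Li \<phi> * (Dk (Lf \<phi>) * Li \<phi> + Lf \<phi> * Dk (Li \<phi>)) = 0" by simp
  then have "Li \<phi> ^ 2 * Dk (Lf \<phi>) + (Lf \<phi> * Li \<phi>) * Dk (Li \<phi>) = 0"
    by (simp add: algebra_simps power2_eq_square)
  then show ?thesis using Lf_Li by (simp add: eq_neg_iff_add_eq_0 add.commute)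
qed

lemma Du_Q: "Du i (Q \<phi> m) = - (of_nat m * Q \<phi> (Suc m) * Du i (Lf \<phi>))"
proof (induction m)
  case 0 then show ?case by (simp add: Q_def)
next
  case (Suc m)
  have "Du i (Q \<phi> (Suc m)) = Du i (Li \<phi>) * Q \<phi> m + Li \<phi> * Du i (Q \<phi> m)"
    by (simp add: Q_def)
  also have "\<dots> = - (of_nat (Suc m) * (Li \<phi> ^ Suc (Suc m)) * Du i (Lf \<phi>))"
    unfolding Suc.IH unfolding Du_Li Q_def by (simp add: algebra_simps power2_eq_square)
  finally show ?case by (simp add: Q_def)
qed

lemma Dk_Q: "Dk (Q \<phi> m) = - (of_nat m * Q \<phi> (Suc m) * Dk (Lf \<phi>))"
proof (induction m)
  case 0 then show ?case by (simp add: Q_def)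
next
  case (Suc m)
  have "Dk (Q \<phi> (Suc m)) = Dk (Li \<phi>) * Q \<phi> m + Li \<phi> * Dk (Q \<phi> m)"
    by (simp add: Q_def)
  also have "\<dots> = - (of_nat (Suc m) * (Li \<phi> ^ Suc (Suc m)) * Dk (Lf \<phi>))"
    unfolding Suc.IH unfolding Dk_Li Q_def by (simp add: algebra_simps power2_eq_square)
  finally show ?case by (simp add: Q_def)
qed

lemma Ex_dco: "Exq \<phi> (dco a) = ssum (\<lambda>m. fls_const (- (of_nat m * a m)) * Q \<phi> (Suc m))"
  unfolding Exq_def by (subst ssum_shift[OF cvc_Ex]) (simp add: dco_def)

lemma cvc_dco: "cvc (\<lambda>m. fls_const (- (of_nat m * a m)) * Q \<phi> (Suc m)) 0"
  unfolding cvc_def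
proof
  fix m
  show "lbd (fls_const (- (of_nat m * a m)) * Q \<phi> (Suc m)) (0 + int m)"
    using lbd_cQ[of _ "Suc m"] by (rule lbd_mono) simp
qed

lemma cvc_mult_right: "lbd f a \<Longrightarrow> cvc S c \<Longrightarrow> cvc (\<lambda>m. S m * f) (a + c)"
  using cvc_mult_left[of f a S c] by (simp add: mult.commute)

lemma ssum_times_right:
  assumes "cvc S c" "lbd f a"
  shows "ssum (\<lambda>m. S m * f) = ssum S * f"
  using ssum_mult_right[OF assms] by simp

lemma D_Ex_gen:
  assumes D: "\<And>m. D (fls_const (a m) * Q \<phi> m) = fls_const (b m) * Q \<phi> m
                   + fls_const (- (of_nat m * a m)) * Q \<phi> (Suc m) * DL"
    and Dss: "D (Exq \<phi> a) = ssum (\<lambda>m. D (fls_const (a m) * Q \<phi> m))"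
    and lDL: "lbd DL e" and e: "e \<le> 0"
  shows "D (Exq \<phi> a) = Exq \<phi> b + Exq \<phi> (dco a) * DL"
proof -
  have c1: "cvc (\<lambda>m. fls_const (b m) * Q \<phi> m) e" by (rule cvc_mono[OF cvc_Ex e])
  have c2: "cvc (\<lambda>m. fls_const (- (of_nat m * a m)) * Q \<phi> (Suc m) * DL) e"
    using cvc_mult_right[OF lDL cvc_dco] by simp
  have "D (Exq \<phi> a) = ssum (\<lambda>m. fls_const (b m) * Q \<phi> m
                    + fls_const (- (of_nat m * a m)) * Q \<phi> (Suc m) * DL)"
    unfolding Dss D ..
  also have "\<dots> = Exq \<phi> b + ssum (\<lambda>m. fls_const (- (of_nat m * a m)) * Q \<phi> (Suc m) * DL)"
    unfolding Exq_def by (rule ssum_add[OF c1 c2])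
  also have "ssum (\<lambda>m. fls_const (- (of_nat m * a m)) * Q \<phi> (Suc m) * DL) = Exq \<phi> (dco a) * DL"
    unfolding Ex_dco by (rule ssum_times_right[OF cvc_dco lDL])
  finally show ?thesis .
qed

lemma fc_nat: "fls_const (of_nat m * c) = (of_nat m :: fs) * fls_const c"
  by (metis fls_const_mult_const fls_of_nat)

lemma cnm2: "fls_const (- (of_nat m * (c::sm))) * Y * Z = fls_const c * (- (of_nat m * Y * Z))"
proof -
  have "fls_const (- (of_nat m * c)) = - ((of_nat m :: fs) * fls_const c)"
    using fc_nat[of m c] by (simp add: fls_const_uminus)
  then show ?thesis by (simp add: algebra_simps)
qed

lemma Du_Ex: "Du i (Exq \<phi> a) = Exq \<phi> (\<lambda>m. Dsm i (a m)) + Exq \<phi> (dco a) * Du i (Lf \<phi>)"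
proof (rule D_Ex_gen)
  show "Du i (Exq \<phi> a) = ssum (\<lambda>m. Du i (fls_const (a m) * Q \<phi> m))"
    unfolding Exq_def by (rule Du_ssum[OF cvc_Ex])
  show "lbd (Du i (Lf \<phi>)) (-1)" by (rule lbd_Du[OF lbd_Lf])
  fix m
  show "Du i (fls_const (a m) * Q \<phi> m) = fls_const (Dsm i (a m)) * Q \<phi> m
      + fls_const (- (of_nat m * a m)) * Q \<phi> (Suc m) * Du i (Lf \<phi>)"
    by (simp only: Du_mult Du_const Du_Q cnm2)
qed simp

lemma Dk_Ex: "Dk (Exq \<phi> a) = Exq \<phi> (dco a) * Dk (Lf \<phi>)"
proof -
  have "Dk (Exq \<phi> a) = Exq \<phi> (\<lambda>m. 0) + Exq \<phi> (dco a) * Dk (Lf \<phi>)"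
  proof (rule D_Ex_gen)
    show "Dk (Exq \<phi> a) = ssum (\<lambda>m. Dk (fls_const (a m) * Q \<phi> m))"
      unfolding Exq_def by (rule Dk_ssum[OF cvc_Ex])
    show "lbd (Dk (Lf \<phi>)) 0" using lbd_Dk[OF lbd_Lf] by simp
    fix m
    show "Dk (fls_const (a m) * Q \<phi> m) = fls_const 0 * Q \<phi> m
        + fls_const (- (of_nat m * a m)) * Q \<phi> (Suc m) * Dk (Lf \<phi>)"
      by (simp only: Dk_mult Dk_const Dk_Q cnm2 fls_const_0 mult_zero_left add_0_left)
  qed simp
  moreover have "Exq \<phi> (\<lambda>m. 0) = 0" by (simp add: Exq_def)
  ultimately show ?thesis by simp
qed

abbreviation Exx :: "(nat \<Rightarrow> sm) \<Rightarrow> nat \<Rightarrow> fs" where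
  "Exx a i \<equiv> Exq \<phi> (\<lambda>m. Dsm i (a m))"

lemma Pbr_Ex_Ex:
  "Pbr (Exq \<phi> a) (Exq \<phi> b) = Dk (Lf \<phi>) * (Exq \<phi> (dco a) * Exx b vx - Exx a vx * Exq \<phi> (dco b))"
  unfolding Pbr_def Du_Ex Dk_Ex by (simp add: algebra_simps)

lemma Pbr_Ex_Lf: "Pbr (Exq \<phi> a) (Lf \<phi>) = - (Dk (Lf \<phi>) * Exx a vx)"
  unfolding Pbr_def Du_Ex Dk_Ex by (simp add: algebra_simps)

lemma Pbr_Lf_Ex: "Pbr (Lf \<phi>) (Exq \<phi> b) = Dk (Lf \<phi>) * Exx b vx"
  unfolding Pbr_def Du_Ex Dk_Ex by (simp add: algebra_simps)

lemma Nab_0: "Nab u \<phi> $$ 0 = Dsm u (\<phi> $$ 0)"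
proof -
  have ps: "lbd (Du u \<phi>) 0" by (rule lbd_Du[OF ph])
  have c: "cvc (\<lambda>m. sc (1 / fact (Suc m)) ((Pbr \<phi> ^^ m) (Du u \<phi>))) 0" by (rule cvc_Exp[OF ph ps])
  have ct: "cvc (\<lambda>m. sc (1 / fact (Suc (Suc m))) ((Pbr \<phi> ^^ Suc m) (Du u \<phi>))) 1"
    unfolding cvc_def
  proof
    fix m
    have "lbd ((Pbr \<phi> ^^ Suc m) (Du u \<phi>)) (0 + int (Suc m))" by (rule lbd_Ap[OF ph ps])
    then show "lbd (sc (1 / fact (Suc (Suc m))) ((Pbr \<phi> ^^ Suc m) (Du u \<phi>))) (1 + int m)"
      by (intro lbd_sc) simp
  qed
  have "Nab u \<phi> = Du u \<phi> + ssum (\<lambda>m. sc (1 / fact (Suc (Suc m))) ((Pbr \<phi> ^^ Suc m) (Du u \<phi>)))"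
    unfolding Nab_def by (subst ssum_shift[OF c]) simp
  moreover have "ssum (\<lambda>m. sc (1 / fact (Suc (Suc m))) ((Pbr \<phi> ^^ Suc m) (Du u \<phi>))) $$ 0 = 0"
    using lbd_ssum[OF ct] by (simp add: lbd_def)
  ultimately show ?thesis by simp
qed

lemma Pbr_X_inv_left: "Pbr fls_X_inv g = Du vx g"
  by (simp add: Pbr_def Dk_X_inv)

theorem core:
  assumes uvx: "u \<noteq> vx"
  and X0: "X0 = fls_const (crd vx) + fls_const (cst Nr * crd vs) * fls_X"
  and OS: "ExpA \<phi> X0 = Exq \<phi> mm"
  and m1: "mm 1 = cst Nr * crd vs"
  shows "Nab u \<phi> = Exq \<phi> (\<lambda>m. if m = 0 then Dsm u (\<phi> $$ 0) else - (cst (1 / real m) * Dsm u (mm (Suc m))))"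
proof -
  have vsx: "vs \<noteq> vx" "vx \<noteq> vs" by (simp_all add: vs_def vx_def)
  obtain c where cN: "Nab u \<phi> = Exq \<phi> c"
    using Ex_exists[OF lbd_Nab[OF ph]] by blast
  have lX0: "lbd X0 0"
    unfolding X0 by (intro lbd_add lbd_const) (rule lbd_mono[OF lbd_mult[OF lbd_const lbd_X]], simp)
  define M where "M = ExpA \<phi> X0"
  define l where "l = Dk (Lf \<phi>)"
  have d1: "Du u (Lf \<phi>) = Pbr (Nab u \<phi>) (Lf \<phi>)"
    using dexp[OF ph lbd_X_inv, of u] by (simp add: Lf_def ExpA_zero)
  have d2: "Du u M = ExpA \<phi> (Du u X0) + Pbr (Nab u \<phi>) M"
    unfolding M_def by (rule dexp[OF ph lX0])
  have d3: "Pbr (Lf \<phi>) M = 1"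
  proof -
    have "Du vx X0 = 1"
      unfolding X0 by (simp add: Dsm_crd vsx)
    then have "Pbr fls_X_inv X0 = 1" by (simp add: Pbr_X_inv_left)
    then show ?thesis
      using ExpA_Pbr[OF ph lbd_X_inv lX0] ExpA_one[OF ph] by (simp add: Lf_def M_def)
  qed
  define r where "r = Nr * (if u = vs then 1 else 0)"
  have dr: "Dsm u (mm 1) = cst r"
    unfolding m1 r_def by (simp add: Dsm_crd cst_mult[symmetric])
  have d4: "ExpA \<phi> (Du u X0) = Exq \<phi> (\<lambda>m. if m = 1 then cst r else 0)"
  proof -
    have "Du u X0 = sc r fls_X"
      unfolding X0 r_def by (simp add: Dsm_crd uvx cst_mult[symmetric])
    then have "ExpA \<phi> (Du u X0) = sc r (Li \<phi>)"
      using ExpA_sc[OF ph lbd_X] by (simp add: Li_def)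
    also have "\<dots> = Exq \<phi> (\<lambda>m. if m = 1 then cst r else 0)"
      by (simp add: Ex_single Q_def)
    finally show ?thesis .
  qed
  have e1: "Du u M = Exq \<phi> (\<lambda>m. Dsm u (mm m)) + Exq \<phi> (dco mm) * (- (l * Exx c vx))"
    unfolding M_def OS Du_Ex d1 cN Pbr_Ex_Lf l_def ..
  have e2: "Pbr (Nab u \<phi>) M = l * (Exq \<phi> (dco c) * Exx mm vx - Exx c vx * Exq \<phi> (dco mm))"
    unfolding cN M_def OS Pbr_Ex_Ex l_def ..
  have e3: "l * Exx mm vx = 1"
    using d3 unfolding M_def OS Pbr_Lf_Ex l_def .
  have "Exq \<phi> (\<lambda>m. Dsm u (mm m)) + Exq \<phi> (dco mm) * (- (l * Exx c vx))
      = Exq \<phi> (\<lambda>m. if m = 1 then cst r else 0) + l * (Exq \<phi> (dco c) * Exx mm vx - Exx c vx * Exq \<phi> (dco mm))"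
    using d2 e1 e2 d4 by simp
  then have "Exq \<phi> (\<lambda>m. Dsm u (mm m)) = Exq \<phi> (\<lambda>m. if m = 1 then cst r else 0) + Exq \<phi> (dco c)"
    using e3 by (rule ring_help)
  also have "\<dots> = Exq \<phi> (\<lambda>m. (if m = 1 then cst r else 0) + dco c m)" by (rule Ex_add)
  finally have key: "Dsm u (mm m) = (if m = 1 then cst r else 0) + dco c m" for m
    by (rule Ex_inj)
  have ck: "c k = - (cst (1 / real k) * Dsm u (mm (Suc k)))" if "k \<ge> 1" for k
  proof -
    have "Dsm u (mm (Suc k)) = - (of_nat k * c k)"
      using key[of "Suc k"] that by (simp add: dco_def)
    then have "cst (1 / real k) * Dsm u (mm (Suc k)) = - (cst (1 / real k) * of_nat k * c k)"
      by (simp add: mult.assoc)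
    also have "cst (1 / real k) * of_nat k = 1"
      using that by (simp add: of_nat_sm cst_mult[symmetric])
    finally show ?thesis by simp
  qed
  have c0: "c 0 = Dsm u (\<phi> $$ 0)"
    using Ex_0coef[of c] Nab_0[of u] cN by simp
  have "c = (\<lambda>m. if m = 0 then Dsm u (\<phi> $$ 0) else - (cst (1 / real m) * Dsm u (mm (Suc m))))"
  proof
    fix m show "c m = (if m = 0 then Dsm u (\<phi> $$ 0) else - (cst (1 / real m) * Dsm u (mm (Suc m))))"
      using c0 ck[of m] by (cases "m = 0") auto
  qed
  then show ?thesis using cN by simp
qed

end


unbundle fps_syntax

lemma mult_nth_gen:
  fixes f g :: "'a::comm_semiring_1 fls"
  assumes fa: "\<And>i. i < a \<Longrightarrow> f $$ i = 0" and gb: "\<And>i. i < b \<Longrightarrow> g $$ i = 0"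
    and fin: "finite I" and sub: "{a..n-b} \<subseteq> I"
  shows "(f*g) $$ n = (\<Sum>i\<in>I. f$$i * g$$(n-i))"
proof -
  define S where "S = {fls_subdegree f..n - fls_subdegree g}"
  have "(f*g) $$ n = (\<Sum>i\<in>S. f$$i * g$$(n-i))" unfolding S_def by (rule fls_times_nth(2))
  also have "\<dots> = (\<Sum>i\<in>S \<union> I. f$$i * g$$(n-i))"
  proof (rule sum.mono_neutral_left)
    show "\<forall>i\<in>S \<union> I - S. f $$ i * g $$ (n - i) = 0"
    proof
      fix i assume "i \<in> S \<union> I - S"
      then have "i < fls_subdegree f \<or> n - i < fls_subdegree g" by (auto simp: S_def)
      then show "f $$ i * g $$ (n - i) = 0" by auto
    qed
  qed (auto simp: S_def fin)
  also have "\<dots> = (\<Sum>i\<in>I. f$$i * g$$(n-i))"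
  proof (rule sum.mono_neutral_right)
    show "\<forall>i\<in>S \<union> I - I. f $$ i * g $$ (n - i) = 0"
    proof
      fix i assume "i \<in> S \<union> I - I"
      then have "i \<notin> {a..n-b}" using sub by blast
      then have "i < a \<or> n - i < b" by auto
      then show "f $$ i * g $$ (n - i) = 0" using fa gb by auto
    qed
  qed (auto simp: S_def fin)
  finally show ?thesis .
qed

definition ub :: "ser \<Rightarrow> int \<Rightarrow> bool" where "ub F d \<longleftrightarrow> (\<forall>a>d. F a = zc)"

lemma bdd_ub: "bdd_ser F \<longleftrightarrow> (\<exists>d. ub F d)" by (simp add: bdd_ser_def ub_def)

lemma zc_app [simp]: "zc p = 0" by (simp add: zc_def)

lemma lmul_sum:
  assumes "ub F dF" "ub G dG"
  shows "lmul F G j p = (\<Sum>a\<in>{j - dG..dF}. F a p * G (j - a) p)"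
proof -
  have sub: "{a. F a \<noteq> zc \<and> G (j - a) \<noteq> zc} \<subseteq> {j - dG..dF}"
  proof
    fix x assume "x \<in> {a. F a \<noteq> zc \<and> G (j - a) \<noteq> zc}"
    then have "F x \<noteq> zc" "G (j - x) \<noteq> zc" by auto
    then have "\<not> x > dF" "\<not> j - x > dG" using assms by (auto simp: ub_def)
    then show "x \<in> {j - dG..dF}" by auto
  qed
  show ?thesis unfolding lmul_def
    by (rule sum.mono_neutral_left) (use sub in auto)
qed

definition evp :: "(nat \<Rightarrow> real) \<Rightarrow> ser \<Rightarrow> real fls" where
  "evp p F = Abs_fls (\<lambda>n. F (- n) p)"

lemma evp_nth: "ub F d \<Longrightarrow> evp p F $$ n = F (- n) p"
  unfolding evp_def by (rule nth_Abs_fls_lower_bound[of "- d"]) (auto simp: ub_def)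

lemma ub_mono: "ub F d \<Longrightarrow> d \<le> e \<Longrightarrow> ub F e" by (simp add: ub_def)

lemma ub_lmul: "ub F dF \<Longrightarrow> ub G dG \<Longrightarrow> ub (lmul F G) (dF + dG)"
  unfolding ub_def[of "lmul F G"]
proof (intro allI impI)
  fix a assume F: "ub F dF" and G: "ub G dG" and a: "a > dF + dG"
  show "lmul F G a = zc"
    unfolding lmul_sum[OF F G] zc_def[symmetric] using a by (auto simp: zc_def)
qed

lemma evp_lmul:
  assumes F: "ub F dF" and G: "ub G dG"
  shows "evp p (lmul F G) = evp p F * evp p G"
proof (rule fls_eqI)
  fix n
  have "(evp p F * evp p G) $$ n = (\<Sum>i\<in>{- dF..n + dG}. evp p F $$ i * evp p G $$ (n - i))"
    by (rule mult_nth_gen[of "- dF" _ "- dG"]) (auto simp: evp_nth[OF F] evp_nth[OF G] ub_def[symmetric] F[unfolded ub_def] G[unfolded ub_def])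
  also have "\<dots> = (\<Sum>i\<in>{- dF..n + dG}. F (- i) p * G (i - n) p)"
    by (simp add: evp_nth[OF F] evp_nth[OF G])
  also have "\<dots> = (\<Sum>a\<in>{- n - dG..dF}. F a p * G (- n - a) p)"
    by (rule sum.reindex_bij_witness[of _ uminus uminus]) auto
  also have "\<dots> = lmul F G (- n) p" by (rule lmul_sum[OF F G, symmetric])
  also have "\<dots> = evp p (lmul F G) $$ n" by (rule evp_nth[OF ub_lmul[OF F G], symmetric])
  finally show "evp p (lmul F G) $$ n = (evp p F * evp p G) $$ n" by simp
qed

lemma ub_lone: "ub lone 0" by (simp add: ub_def lone_def lcst_def)
lemma evp_lone: "evp p lone = 1"
proof (rule fls_eqI)
  fix n
  have "evp p lone $$ n = lone (- n) p" by (rule evp_nth[OF ub_lone])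
  then show "evp p lone $$ n = 1 $$ n" by (simp add: lone_def lcst_def zc_def)
qed

lemma evp_inj: "ub F d \<Longrightarrow> ub G e \<Longrightarrow> (\<And>p. evp p F = evp p G) \<Longrightarrow> F = G"
proof (intro ext)
  fix j p assume F: "ub F d" and G: "ub G e" and h: "\<And>p. evp p F = evp p G"
  have "evp p F $$ (- j) = evp p G $$ (- j)" using h by simp
  then show "F j p = G j p" by (simp add: evp_nth[OF F] evp_nth[OF G])
qed

section \<open>Embedding\<close>

definition emb :: "fs \<Rightarrow> ser" where "emb f = (\<lambda>j. Rep_sm (f $$ (- j)))"

lemma emb_app: "emb f j p = Rep_sm (f $$ (- j)) p" by (simp add: emb_def)

lemma ub_emb: "lbd f c \<Longrightarrow> ub (emb f) (- c)"
  by (auto simp: ub_def emb_def lbd_def Rep_sm_0)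

lemma ub_emb': "ub (emb f) (- fls_subdegree f)"
  by (rule ub_emb[OF lbd_subdeg])

lemma bdd_emb: "bdd_ser (emb f)" using ub_emb' bdd_ub by blast

lemma emb_inj: "emb f = emb g \<Longrightarrow> f = g"
proof (rule fls_eqI)
  fix n assume "emb f = emb g"
  then have "Rep_sm (f $$ n) = Rep_sm (g $$ n)" unfolding emb_def by (metis minus_minus)
  then show "f $$ n = g $$ n" by (simp add: Rep_sm_inject)
qed

lemma emb_eq_zc: "emb f j = zc \<longleftrightarrow> f $$ (- j) = 0"
  by (simp add: emb_def Rep_sm_eq0)

lemma ladd_emb: "ladd (emb f) (emb g) = emb (f + g)"
  by (simp add: ladd_def emb_def Rep_sm_add)
lemma lsub_emb: "lsub (emb f) (emb g) = emb (f - g)"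
  by (simp add: lsub_def emb_def Rep_sm_diff)
lemma lneg_emb: "lneg (emb f) = emb (- f)"
  by (simp add: lneg_def emb_def Rep_sm_uminus)
lemma lscal_emb: "lscal (Rep_sm c) (emb f) = emb (fls_const c * f)"
  by (simp add: lscal_def emb_def fls_mult_const_nth Rep_sm_mult)
lemma lscal_emb_real: "lscal (\<lambda>p. r) (emb f) = emb (sc r f)"
  using lscal_emb[of "cst r" f] by (simp add: Rep_sm_cst)
lemma lcst_emb: "lcst (Rep_sm c) = emb (fls_const c)"
  by (auto simp: lcst_def emb_def Rep_sm_0 fun_eq_iff)
lemma lone_emb: "lone = emb 1"
  using lcst_emb[of 1] by (simp add: lone_def Rep_sm_1)
lemma zser_emb: "zser = emb 0"
  by (simp add: zser_def emb_def Rep_sm_0)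
lemma kser_emb: "kser = emb fls_X_inv"
  by (auto simp: kser_def emb_def Rep_sm_0 Rep_sm_1 fun_eq_iff zc_def)
lemma kshift_emb: "kshift (-1) (emb f) = emb (fls_X * f)"
  by (simp add: kshift_def emb_def fls_X_times_conv_shift algebra_simps)
lemma du_emb: "du i (emb f) = emb (Du i f)"
  by (simp add: du_def emb_def Rep_sm_Dsm)
lemma dk_emb: "dk (emb f) = emb (Dk f)"
proof (intro ext)
  fix j p
  have h: "Rep_sm (Dk f $$ (- j)) p = - (real_of_int (- j - 1) * Rep_sm (f $$ (- j - 1)) p)"
    unfolding Dk_nth by (simp add: Rep_sm_uminus Rep_sm_mult of_int_sm Rep_sm_cst)
  have i: "- (j + 1) = - j - 1" by simp
  show "dk (emb f) j p = emb (Dk f) j p" unfolding dk_def emb_def h i by (simp add: algebra_simps)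
qed

lemma lmul_emb: "lmul (emb f) (emb g) = emb (f * g)"
proof (intro ext)
  fix j p
  define a b where "a = fls_subdegree f" and "b = fls_subdegree g"
  have "lmul (emb f) (emb g) j p = (\<Sum>x\<in>{j + b..- a}. emb f x p * emb g (j - x) p)"
    using lmul_sum[OF ub_emb' ub_emb', of f g j p] by (simp add: a_def b_def)
  also have "\<dots> = (\<Sum>i\<in>{a..- j - b}. Rep_sm (f $$ i) p * Rep_sm (g $$ (- j - i)) p)"
    by (rule sum.reindex_bij_witness[of _ uminus uminus]) (auto simp: emb_def)
  also have "\<dots> = Rep_sm ((f * g) $$ (- j)) p"
    by (simp add: mult_nth_set[OF lbd_subdeg lbd_subdeg, of "{a..- j - b}"] a_def b_def
        Rep_sm_sum Rep_sm_mult)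
  finally show "lmul (emb f) (emb g) j p = emb (f * g) j p" by (simp add: emb_def)
qed

lemma pbr_emb: "pbr (emb f) (emb g) = emb (Pbr f g)"
  by (simp add: pbr_def Pbr_def dk_emb du_emb lmul_emb lsub_emb)

lemma lpow_emb: "lpow (emb f) n = emb (f ^ n)"
  by (induction n) (simp_all add: lone_emb lmul_emb)

lemma pbr_pow_emb: "(pbr (emb f) ^^ m) (emb g) = emb ((Pbr f ^^ m) g)"
  by (induction m) (simp_all add: pbr_emb)


lemma fsum_emb:
  assumes "cvc S c"
  shows "fsum (\<lambda>m. emb (S m)) = emb (ssum S)"
proof (intro ext)
  fix j p
  define M where "M = {..nat (- j - c)}"
  have supp: "{m. emb (S m) j \<noteq> zc} \<subseteq> M"
  proof
    fix m assume "m \<in> {m. emb (S m) j \<noteq> zc}"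
    then have "S m $$ (- j) \<noteq> 0" by (simp add: emb_eq_zc)
    then have "\<not> (- j < c + int m)" using cvcD[OF assms] by blast
    then have "c + int m \<le> - j" by simp
    then show "m \<in> M" unfolding M_def using le_natI by simp
  qed
  have "fsum (\<lambda>m. emb (S m)) j p = (\<Sum>m\<in>M. emb (S m) j p)"
    unfolding fsum_def
    by (rule sum.mono_neutral_left) (use supp in \<open>auto simp: M_def\<close>)
  also have "\<dots> = Rep_sm (ssum S $$ (- j)) p"
  proof -
    have "ssum S $$ (- j) = (\<Sum>m\<in>M. S m $$ (- j))"
      by (rule ssum_nth_set[OF assms]) (auto simp: M_def intro: le_natI)
    then show ?thesis by (simp add: Rep_sm_sum emb_def)
  qed
  finally show "fsum (\<lambda>m. emb (S m)) j p = emb (ssum S) j p" by (simp add: emb_def)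
qed

lemma exp_ad_emb:
  assumes "lbd \<phi> 0" "lbd X c"
  shows "exp_ad (emb \<phi>) (emb X) = emb (ExpA \<phi> X)"
  unfolding exp_ad_def ExpA_def pbr_pow_emb lscal_emb_real
  by (rule fsum_emb[OF cvc_Exp[OF assms]])

lemma nabla_emb:
  assumes "lbd \<phi> 0"
  shows "nabla i (emb \<phi>) (emb \<phi>) = emb (Nab i \<phi>)"
  unfolding nabla_def Nab_def du_emb pbr_pow_emb lscal_emb_real
  by (rule fsum_emb[OF cvc_Exp[OF assms lbd_Du[OF assms]]])

lemma linv_emb:
  assumes ph: "lbd \<phi> 0"
  shows "linv (emb (Lf \<phi>)) = emb (Li \<phi>)"
  unfolding linv_def
proof (rule the_equality)
  have LL: "Li \<phi> * Lf \<phi> = 1" using Lf_Li[OF ph] by (simp add: mult.commute)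
  show "bdd_ser (emb (Li \<phi>)) \<and> lmul (emb (Li \<phi>)) (emb (Lf \<phi>)) = lone"
    by (simp add: bdd_emb lmul_emb LL lone_emb)
  fix G assume G: "bdd_ser G \<and> lmul G (emb (Lf \<phi>)) = lone"
  then obtain d where d: "ub G d" using bdd_ub by blast
  have uL: "ub (emb (Lf \<phi>)) (- fls_subdegree (Lf \<phi>))" by (rule ub_emb')
  have uI: "ub (emb (Li \<phi>)) (- fls_subdegree (Li \<phi>))" by (rule ub_emb')
  have LI: "lmul (emb (Lf \<phi>)) (emb (Li \<phi>)) = lone" by (simp add: lmul_emb Lf_Li[OF ph] lone_emb)
  show "G = emb (Li \<phi>)"
  proof (rule evp_inj[OF d uI])
    fix p
    have 1: "evp p G * evp p (emb (Lf \<phi>)) = 1"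
      using evp_lmul[OF d uL, of p] G evp_lone by simp
    have 2: "evp p (emb (Lf \<phi>)) * evp p (emb (Li \<phi>)) = 1"
      using evp_lmul[OF uL uI, of p] LI evp_lone by simp
    have "evp p G = evp p G * (evp p (emb (Lf \<phi>)) * evp p (emb (Li \<phi>)))" using 2 by simp
    also have "\<dots> = (evp p G * evp p (emb (Lf \<phi>))) * evp p (emb (Li \<phi>))" by (simp add: mult.assoc)
    also have "\<dots> = evp p (emb (Li \<phi>))" using 1 by simp
    finally show "evp p G = evp p (emb (Li \<phi>))" .
  qed
qed

definition vanish :: "(nat \<Rightarrow> ser) \<Rightarrow> bool" where
  "vanish S \<longleftrightarrow> (\<forall>j. \<exists>K. \<forall>m>K. S m j = zc)"

lemma fsum_upto:
  assumes "\<forall>m>K. S m j = zc"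
  shows "fsum S j p = (\<Sum>m\<le>K. S m j p)"
  unfolding fsum_def
proof (rule sum.mono_neutral_left)
  show "{m. S m j \<noteq> zc} \<subseteq> {..K}" using assms by (auto simp: not_le[symmetric])
qed auto

lemma fsum_shift:
  assumes "vanish S"
  shows "fsum S = ladd (S 0) (fsum (\<lambda>m. S (Suc m)))"
proof (intro ext)
  fix j p
  obtain K where K: "\<forall>m>K. S m j = zc" using assms by (auto simp: vanish_def)
  have K': "\<forall>m>K. S (Suc m) j = zc" using K by auto
  have "fsum S j p = (\<Sum>m\<le>Suc K. S m j p)" by (rule fsum_upto) (use K in auto)
  also have "\<dots> = S 0 j p + (\<Sum>m\<le>K. S (Suc m) j p)" by (simp only: sum.atMost_Suc_shift)
  also have "(\<Sum>m\<le>K. S (Suc m) j p) = fsum (\<lambda>m. S (Suc m)) j p"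
    using fsum_upto[of K "\<lambda>m. S (Suc m)" j p] K' by simp
  finally show "fsum S j p = ladd (S 0) (fsum (\<lambda>m. S (Suc m))) j p" by (simp add: ladd_def)
qed

lemma fsum_lneg: "fsum (\<lambda>m. lneg (S m)) = lneg (fsum S)"
proof (intro ext)
  fix j p
  have e: "{m. lneg (S m) j \<noteq> zc} = {m. S m j \<noteq> zc}"
  proof -
    have "lneg (S m) j = zc \<longleftrightarrow> S m j = zc" for m
      by (auto simp: lneg_def zc_def fun_eq_iff)
    then show ?thesis by auto
  qed
  show "fsum (\<lambda>m. lneg (S m)) j p = lneg (fsum S) j p"
    unfolding fsum_def e unfolding lneg_def by (simp add: sum_negf)
qed

lemma vanish_Q:
  assumes ph: "lbd \<phi> 0"
  shows "vanish (\<lambda>m. lscal (a m) (emb (Q \<phi> (m + k))))"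
  unfolding vanish_def
proof
  fix j
  show "\<exists>K. \<forall>m>K. lscal (a m) (emb (Q \<phi> (m + k))) j = zc"
  proof (intro exI allI impI)
    fix m assume "m > nat (- j)"
    then have "- j < int (m + k)" by linarith
    then have "Q \<phi> (m + k) $$ (- j) = 0" using lbd_Q[OF ph, of "m + k"] by (simp add: lbd_def)
    then show "lscal (a m) (emb (Q \<phi> (m + k))) j = zc"
      by (simp add: lscal_def emb_def Rep_sm_0 zc_def)
  qed
qed

lemma vanish_Q0:
  assumes ph: "lbd \<phi> 0"
  shows "vanish (\<lambda>m. lscal (a m) (emb (Q \<phi> m)))"
  using vanish_Q[OF ph, of a 0] by simp

definition SE :: "fs \<Rightarrow> (nat \<Rightarrow> coef) \<Rightarrow> ser" where
  "SE \<phi> a = fsum (\<lambda>m. lscal (a m) (emb (Q \<phi> m)))"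

lemma SE_nth:
  assumes ph: "lbd \<phi> 0"
  shows "SE \<phi> a (- int k) p = (\<Sum>m\<le>k. a m p * Rep_sm (Q \<phi> m $$ int k) p)"
proof -
  have "\<forall>m>k. lscal (a m) (emb (Q \<phi> m)) (- int k) = zc"
  proof (intro allI impI)
    fix m assume "m > k"
    then have "Q \<phi> m $$ int k = 0" using lbd_Q[OF ph, of m] by (simp add: lbd_def)
    then show "lscal (a m) (emb (Q \<phi> m)) (- int k) = zc"
      by (simp add: lscal_def emb_def Rep_sm_0 zc_def)
  qed
  then show ?thesis unfolding SE_def by (simp add: fsum_upto lscal_def emb_def)
qed

lemma SE_inj:
  assumes ph: "lbd \<phi> 0" and eq: "SE \<phi> a = SE \<phi> b"
  shows "a m = b m"
proof
  fix p
  show "a m p = b m p"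
  proof (induction m rule: less_induct)
    case (less m)
    have "SE \<phi> a (- int m) p = SE \<phi> b (- int m) p" using eq by simp
    then have "(\<Sum>i\<le>m. a i p * Rep_sm (Q \<phi> i $$ int m) p) = (\<Sum>i\<le>m. b i p * Rep_sm (Q \<phi> i $$ int m) p)"
      by (simp add: SE_nth[OF ph])
    then have "a m p + (\<Sum>i<m. a i p * Rep_sm (Q \<phi> i $$ int m) p) = b m p + (\<Sum>i<m. b i p * Rep_sm (Q \<phi> i $$ int m) p)"
      by (simp add: lessThan_Suc_atMost[symmetric] Q_lead[OF ph] Rep_sm_1)
    moreover have "(\<Sum>i<m. a i p * Rep_sm (Q \<phi> i $$ int m) p) = (\<Sum>i<m. b i p * Rep_sm (Q \<phi> i $$ int m) p)"
      using less.IH by simp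
    ultimately show ?case by simp
  qed
qed

lemma SE_Exq:
  assumes ph: "lbd \<phi> 0"
  shows "emb (Exq \<phi> a) = SE \<phi> (\<lambda>m. Rep_sm (a m))"
  unfolding SE_def Exq_def lscal_emb by (rule fsum_emb[OF cvc_Ex[OF ph], symmetric])

lemma lscal_lone: "lscal c lone = lcst c"
  by (auto simp: lscal_def lone_def lcst_def fun_eq_iff zc_def)


unbundle fps_syntax

lemma Abs_sm_zc: "Abs_sm zc = 0"
  by (metis Rep_sm_0 Rep_sm_inverse)

lemma vanish_if0: "vanish S \<Longrightarrow> vanish (\<lambda>n. if n = 0 then zser else S n)"
  unfolding vanish_def
proof
  fix j assume "\<forall>j. \<exists>K. \<forall>m>K. S m j = zc"
  then obtain K where "\<forall>m>K. S m j = zc" by blast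
  then show "\<exists>K. \<forall>m>K. (if m = 0 then zser else S m) j = zc" by (auto simp: zser_def)
qed

lemma key_nabla:
  fixes N :: nat and L :: ser and \<phi>f :: fs and v :: "nat \<Rightarrow> coef" and mm :: "nat \<Rightarrow> sm" and u :: nat
  assumes ph: "lbd \<phi>f 0"
    and Lemb: "L = emb (Lf \<phi>f)"
    and lnp: "\<And>m. lnpow L m = emb (Q \<phi>f m)"
    and X0: "X0 = fls_const (crd vx) + fls_const (cst (real N) * crd vs) * fls_X"
    and OS: "ExpA \<phi>f X0 = Exq \<phi>f mm"
    and m1: "mm 1 = cst (real N) * crd vs"
    and vm: "\<And>m. m \<ge> 1 \<Longrightarrow> v m = Rep_sm (mm (Suc m))"
    and uvx: "u \<noteq> vx"
  shows "nabla u (emb \<phi>f) (emb \<phi>f) = ladd (lcst (pd u (Rep_sm (\<phi>f $$ 0))))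
            (lneg (fsum (\<lambda>m. if m = 0 then zser else lscal (\<lambda>p. pd u (v m) p / real m) (lnpow L m))))"
proof -
  define cc where "cc m = (if m = 0 then Dsm u (\<phi>f $$ 0) else - (cst (1 / real m) * Dsm u (mm (Suc m))))" for m
  have core': "Nab u \<phi>f = Exq \<phi>f cc"
    unfolding cc_def by (rule core[OF ph uvx X0 OS m1])
  have van1: "vanish (\<lambda>m. lscal (a m) (emb (Q \<phi>f (Suc m))))" for a
    using vanish_Q[OF ph, of a 1] by simp
  have "nabla u (emb \<phi>f) (emb \<phi>f) = SE \<phi>f (\<lambda>m. Rep_sm (cc m))"
    by (simp add: nabla_emb[OF ph] core' SE_Exq[OF ph])
  also have "\<dots> = ladd (lscal (Rep_sm (cc 0)) (emb (Q \<phi>f 0))) (fsum (\<lambda>m. lscal (Rep_sm (cc (Suc m))) (emb (Q \<phi>f (Suc m)))))"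
    unfolding SE_def by (rule fsum_shift[OF vanish_Q0[OF ph]])
  also have "lscal (Rep_sm (cc 0)) (emb (Q \<phi>f 0)) = lcst (pd u (Rep_sm (\<phi>f $$ 0)))"
    by (simp add: Q0[OF ph] lone_emb[symmetric] lscal_lone cc_def Rep_sm_Dsm)
  finally have A: "nabla u (emb \<phi>f) (emb \<phi>f) = ladd (lcst (pd u (Rep_sm (\<phi>f $$ 0))))
      (fsum (\<lambda>m. lscal (Rep_sm (cc (Suc m))) (emb (Q \<phi>f (Suc m)))))" .
  have B: "fsum (\<lambda>m. if m = 0 then zser else lscal (\<lambda>p. pd u (v m) p / real m) (lnpow L m))
      = ladd zser (fsum (\<lambda>m. lscal (\<lambda>p. pd u (v (Suc m)) p / real (Suc m)) (emb (Q \<phi>f (Suc m)))))"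
  proof -
    have "vanish (\<lambda>m. if m = 0 then zser else lscal (\<lambda>p. pd u (v m) p / real m) (lnpow L m))"
    proof -
      have "vanish (\<lambda>m. lscal (\<lambda>p. pd u (v m) p / real m) (emb (Q \<phi>f m)))" by (rule vanish_Q0[OF ph])
      then show ?thesis unfolding lnp by (rule vanish_if0)
    qed
    from fsum_shift[OF this] show ?thesis by (simp add: lnp)
  qed
  have C: "lscal (\<lambda>p. pd u (v (Suc m)) p / real (Suc m)) F = lneg (lscal (Rep_sm (cc (Suc m))) F)" for m F
  proof -
    have "Rep_sm (cc (Suc m)) = (\<lambda>p. - (pd u (v (Suc m)) p / real (Suc m)))"
      by (simp add: cc_def Rep_sm_uminus Rep_sm_mult Rep_sm_cst Rep_sm_Dsm vm fun_eq_iff)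
    then show ?thesis by (simp add: lscal_def lneg_def fun_eq_iff)
  qed
  have D: "fsum (\<lambda>m. if m = 0 then zser else lscal (\<lambda>p. pd u (v m) p / real m) (lnpow L m))
      = ladd zser (lneg (fsum (\<lambda>m. lscal (Rep_sm (cc (Suc m))) (emb (Q \<phi>f (Suc m))))))"
    unfolding B C fsum_lneg ..
  show ?thesis unfolding A D
    by (simp add: ladd_def lneg_def zser_def zc_def fun_eq_iff)
qed

theorem mainTheorem7:
  fixes N :: nat and L P \<phi> :: ser and v :: "nat \<Rightarrow> coef"
  assumes N_pos: "N \<ge> 1"
    and L_top: "L 1 = (\<lambda>p. 1)" and L_bdd: "\<forall>j>1. L j = zc"
    and P_supp: "\<forall>j. (j > int N \<or> j \<le> 0) \<longrightarrow> P j = zc"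
    and P_lead: "\<forall>p. P (int N) p \<noteq> 0"
    and L_smooth: "\<forall>j. smooth_fn (L j)" and P_smooth: "\<forall>j. smooth_fn (P j)"
    and L_xt: "\<forall>j. dep_xt (L j)" and P_xt: "\<forall>j. dep_xt (P j)"
    and hier_t: "\<forall>n\<ge>1. du (vt n) L = pbr (Bn L n) L"
    and hier_s: "du vs L = pbr_logP N P L"
    and hier_tlogP: "\<forall>n\<ge>1. du (vt n) (logP_reg N P)
                        = lsub (du vs (Bn L n)) (pbr_logP N P (Bn L n))"
    and phi_supp: "\<forall>j>0. \<phi> j = zc"
    and phi_smooth: "\<forall>j. smooth_fn (\<phi> j)" and phi_xt: "\<forall>j. dep_xt (\<phi> j)"
    and dress_L: "L = exp_ad \<phi> kser"
    and dress_t: "\<forall>n\<ge>1. nabla (vt n) \<phi> \<phi> = Bcn L n"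
    and dress_s: "nabla vs \<phi> \<phi> = lsub (logP_reg N P) (NlogL_reg N L)"
    and OS: "exp_ad \<phi> (ladd (lcst (\<lambda>p. p vx)) (lscal (\<lambda>p. real N * p vs) (kshift (-1) lone)))
           = ladd (ladd (lcst (\<lambda>p. p vx)) (lscal (\<lambda>p. real N * p vs) (linv L)))
                  (fsum (\<lambda>n. if n = 0 then zser else lscal (v n) (lnpow L (n + 1))))"
  shows "(\<forall>n\<ge>1. Bn L n
            = lsub (ladd (lpow L n) (lcst (pd (vt n) (\<phi> 0))))
                   (fsum (\<lambda>m. if m = 0 then zser
                              else lscal (\<lambda>p. pd (vt n) (v m) p / real m) (lnpow L m))))
       \<and> logP_reg N P
            = lsub (ladd (NlogL_reg N L) (lcst (pd vs (\<phi> 0))))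
                   (fsum (\<lambda>m. if m = 0 then zser
                              else lscal (\<lambda>p. pd vs (v m) p / real m) (lnpow L m)))"
proof -
  define \<phi>f where "\<phi>f = Abs_fls (\<lambda>n. Abs_sm (\<phi> (- n)))"
  have phz: "\<phi> (- n) = zc" if "n < 0" for n using phi_supp that by simp
  have \<phi>nth: "\<phi>f $$ n = Abs_sm (\<phi> (- n))" for n
    unfolding \<phi>f_def by (rule nth_Abs_fls_lower_bound[of 0]) (simp add: phz Abs_sm_zc)
  have \<phi>emb: "\<phi> = emb \<phi>f"
    by (simp add: emb_def \<phi>nth Abs_sm_inverse' phi_smooth fun_eq_iff)
  have ph: "lbd \<phi>f 0" by (simp add: lbd_def \<phi>nth phz Abs_sm_zc)
  have \<phi>0: "Rep_sm (\<phi>f $$ 0) = \<phi> 0" by (simp add: \<phi>nth Abs_sm_inverse' phi_smooth)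
  have Lemb: "L = emb (Lf \<phi>f)"
    unfolding dress_L \<phi>emb kser_emb Lf_def by (rule exp_ad_emb[OF ph lbd_X_inv])
  have linvL: "linv L = emb (Li \<phi>f)" unfolding Lemb by (rule linv_emb[OF ph])
  have lnp: "lnpow L m = emb (Q \<phi>f m)" for m
    by (simp add: lnpow_def linvL lpow_emb Q_def)
  define X0 where "X0 = fls_const (crd vx) + fls_const (cst (real N) * crd vs) * fls_X"
  have lX0: "lbd X0 0"
    unfolding X0_def by (intro lbd_add lbd_const) (rule lbd_mono[OF lbd_mult[OF lbd_const lbd_X]], simp)
  have X0emb: "ladd (lcst (\<lambda>p. p vx)) (lscal (\<lambda>p. real N * p vs) (kshift (-1) lone)) = emb X0"
  proof -
    have 1: "(\<lambda>p. p vx) = Rep_sm (crd vx)" by (simp add: Rep_sm_crd)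
    have 2: "(\<lambda>p. real N * p vs) = Rep_sm (cst (real N) * crd vs)"
      by (simp add: Rep_sm_mult Rep_sm_cst Rep_sm_crd)
    show ?thesis unfolding 1 2 lone_emb kshift_emb lscal_emb lcst_emb ladd_emb X0_def by simp
  qed
  define M where "M = ExpA \<phi>f X0"
  obtain mm where Mmm: "M = Exq \<phi>f mm"
    using Ex_exists[OF ph lbd_ExpA[OF ph lX0]] unfolding M_def by blast
  define b where "b m = (if m = 0 then (\<lambda>p. p vx) else if m = 1 then (\<lambda>p. real N * p vs) else v (m - 1))" for m
  have van1: "vanish (\<lambda>m. lscal (a m) (emb (Q \<phi>f (Suc m))))" for a
    using vanish_Q[OF ph, of a 1] by simp
  have van2: "vanish (\<lambda>m. lscal (a m) (emb (Q \<phi>f (Suc (Suc m)))))" for a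
    using vanish_Q[OF ph, of a 2] by (simp add: numeral_2_eq_2)
  have SEb: "SE \<phi>f b = ladd (ladd (lcst (\<lambda>p. p vx)) (lscal (\<lambda>p. real N * p vs) (linv L)))
                  (fsum (\<lambda>n. if n = 0 then zser else lscal (v n) (lnpow L (n + 1))))"
  proof -
    have s1: "SE \<phi>f b = ladd (lscal (b 0) (emb (Q \<phi>f 0)))
        (ladd (lscal (b 1) (emb (Q \<phi>f 1))) (fsum (\<lambda>m. lscal (b (Suc (Suc m))) (emb (Q \<phi>f (Suc (Suc m)))))))"
      unfolding SE_def fsum_shift[OF vanish_Q0[OF ph, of b]] fsum_shift[OF van1[of "\<lambda>m. b (Suc m)"]]
      by simp
    have s2: "fsum (\<lambda>n. if n = 0 then zser else lscal (v n) (lnpow L (n + 1)))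
        = ladd zser (fsum (\<lambda>m. lscal (v (Suc m)) (emb (Q \<phi>f (Suc (Suc m))))))"
    proof -
      have "vanish (\<lambda>n. if n = 0 then zser else lscal (v n) (lnpow L (n + 1)))"
        unfolding lnp by (rule vanish_if0[OF vanish_Q[OF ph, of v 1]])
      from fsum_shift[OF this] show ?thesis by (simp add: lnp)
    qed
    have s3: "lscal (b 0) (emb (Q \<phi>f 0)) = lcst (\<lambda>p. p vx)"
      by (simp add: b_def Q0[OF ph] lone_emb[symmetric] lscal_lone)
    have s4: "lscal (b 1) (emb (Q \<phi>f 1)) = lscal (\<lambda>p. real N * p vs) (linv L)"
      by (simp add: b_def Q_def linvL)
    have s5: "(\<lambda>m. lscal (b (Suc (Suc m))) (emb (Q \<phi>f (Suc (Suc m))))) = (\<lambda>m. lscal (v (Suc m)) (emb (Q \<phi>f (Suc (Suc m)))))"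
      by (simp add: b_def)
    show ?thesis unfolding s1 s2 s3 s4 s5
      by (simp add: ladd_def zser_def zc_def fun_eq_iff add.assoc)
  qed
  have "SE \<phi>f (\<lambda>m. Rep_sm (mm m)) = emb M" by (simp add: Mmm SE_Exq[OF ph])
  also have "emb M = exp_ad \<phi> (ladd (lcst (\<lambda>p. p vx)) (lscal (\<lambda>p. real N * p vs) (kshift (-1) lone)))"
    unfolding X0emb \<phi>emb M_def by (rule exp_ad_emb[OF ph lX0, symmetric])
  also have "\<dots> = SE \<phi>f b" unfolding OS SEb ..
  finally have Rb: "Rep_sm (mm m) = b m" for m by (rule SE_inj[OF ph])
  have m1: "mm 1 = cst (real N) * crd vs"
  proof -
    have "Rep_sm (mm 1) = Rep_sm (cst (real N) * crd vs)"
      using Rb[of 1] by (simp add: b_def Rep_sm_mult Rep_sm_cst Rep_sm_crd)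
    then show ?thesis by (simp add: Rep_sm_inject)
  qed
  have vm: "v m = Rep_sm (mm (Suc m))" if "m \<ge> 1" for m
    using Rb[of "Suc m"] that by (simp add: b_def)
  have OSf: "ExpA \<phi>f X0 = Exq \<phi>f mm" using Mmm M_def by simp
  have key: "nabla u \<phi> \<phi> = ladd (lcst (pd u (\<phi> 0)))
      (lneg (fsum (\<lambda>m. if m = 0 then zser else lscal (\<lambda>p. pd u (v m) p / real m) (lnpow L m))))"
    if "u \<noteq> vx" for u
    using key_nabla[OF ph Lemb lnp X0_def OSf m1 vm that] \<phi>emb \<phi>0 by simp
  show ?thesis
  proof (intro conjI allI impI)
    fix n :: nat assume n: "n \<ge> 1"
    have u: "vt n \<noteq> vx" using n by (simp add: vt_def vx_def)
    have "Bn L n = ladd (lpow L n) (Bcn L n)"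
      by (simp add: Bn_def Bcn_def ppos_def pnonpos_def ladd_def lneg_def zc_def fun_eq_iff)
    also have "Bcn L n = nabla (vt n) \<phi> \<phi>" using dress_t n by simp
    finally show "Bn L n = lsub (ladd (lpow L n) (lcst (pd (vt n) (\<phi> 0))))
            (fsum (\<lambda>m. if m = 0 then zser else lscal (\<lambda>p. pd (vt n) (v m) p / real m) (lnpow L m)))"
      unfolding key[OF u] by (simp add: ladd_def lsub_def lneg_def fun_eq_iff)
  next
    have u: "vs \<noteq> vx" by (simp add: vs_def vx_def)
    have "logP_reg N P = ladd (NlogL_reg N L) (nabla vs \<phi> \<phi>)"
      using dress_s by (simp add: lsub_def ladd_def fun_eq_iff)
    then show "logP_reg N P = lsub (ladd (NlogL_reg N L) (lcst (pd vs (\<phi> 0))))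
            (fsum (\<lambda>m. if m = 0 then zser else lscal (\<lambda>p. pd vs (v m) p / real m) (lnpow L m)))"
      unfolding key[OF u] by (simp add: ladd_def lsub_def lneg_def fun_eq_iff)
  qed
qed

end
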